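(* Let $K$ be a compact subset of $I\cap\{(c,\gamma):c_1=-1,\ \gamma<\gamma^+(c)\}$. Then for any $\epsilon>0$ there exist positive constants $\delta$ and $C$, depending only on $\epsilon$ and $K$, such that for all $(c,\gamma)\in K$, $$\left|U^{c,\gamma}_\theta(x)-2-\frac{4}{\ln\frac{1+x}{3}}\right|<C\left|\ln\frac{1+x}{3}\right|^{-2+\epsilon},\quad -1<x<-1+\delta.$$
   Context: For $c=(c_1,c_2,c_3)$ let $P_c(x):=c_1(1-x)+c_2(1+x)+c_3(1-x^2)$ and consider $(1-x^2)U'+2xU+\frac12U^2=P_c(x)$ on $(-1,1)$. For $c_1,c_2\ge-1$ let $\bar c_3(c_1,c_2):=-\frac12(\sqrt{1+c_1}+\sqrt{1+c_2})(\sqrt{1+c_1}+\sqrt{1+c_2}+2)$, $J:=\{c:c_1\ge-1,c_2\ge-1,c_3\ge\bar c_3\}$. For $c\in J$ there are solutions $U^\pm_\theta(c)$ on $(-1,1)$ with $U^-_\theta(c)\le U\le U^+_\theta(c)$ for every solution $U$; $\gamma^\pm(c):=U^\pm_\theta(c)(0)$; $I:=\{(c,\gamma):c\in J,\gamma^-(c)\le\gamma\le\gamma^+(c)\}$; for $(c,\gamma)\in I$, $U^{c,\gamma}_\theta$ is the unique solution on $(-1,1)$ with $U^{c,\gamma}_\theta(0)=\gamma$. *)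

theory Defs
  imports "HOL-Analysis.Analysis"
begin

type_synonym param = "real \<times> real \<times> real"

definition c1 :: "param \<Rightarrow> real" where "c1 c = fst c"
definition c2 :: "param \<Rightarrow> real" where "c2 c = fst (snd c)"
definition c3 :: "param \<Rightarrow> real" where "c3 c = snd (snd c)"

definition Pc :: "param \<Rightarrow> real \<Rightarrow> real" where
  "Pc c x = c1 c * (1 - x) + c2 c * (1 + x) + c3 c * (1 - x^2)"

definition is_sol :: "param \<Rightarrow> (real \<Rightarrow> real) \<Rightarrow> bool" where
  "is_sol c U \<longleftrightarrow> (\<forall>x\<in>{-1<..<1}. \<exists>d. (U has_real_derivative d) (at x) \<and>
      (1 - x^2) * d + 2 * x * U x + (1/2) * (U x)^2 = Pc c x)"

definition c3bar :: "real \<Rightarrow> real \<Rightarrow> real" where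
  "c3bar a b = - (1/2) * (sqrt (1 + a) + sqrt (1 + b)) * (sqrt (1 + a) + sqrt (1 + b) + 2)"

definition J :: "param set" where
  "J = {c. c1 c \<ge> -1 \<and> c2 c \<ge> -1 \<and> c3 c \<ge> c3bar (c1 c) (c2 c)}"

definition is_max_sol :: "param \<Rightarrow> (real \<Rightarrow> real) \<Rightarrow> bool" where
  "is_max_sol c U \<longleftrightarrow> is_sol c U \<and> (\<forall>V. is_sol c V \<longrightarrow> (\<forall>x\<in>{-1<..<1}. V x \<le> U x))"

definition is_min_sol :: "param \<Rightarrow> (real \<Rightarrow> real) \<Rightarrow> bool" where
  "is_min_sol c U \<longleftrightarrow> is_sol c U \<and> (\<forall>V. is_sol c V \<longrightarrow> (\<forall>x\<in>{-1<..<1}. U x \<le> V x))"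

definition gamma_plus :: "param \<Rightarrow> real" where
  "gamma_plus c = (THE g. \<exists>U. is_max_sol c U \<and> U 0 = g)"

definition gamma_minus :: "param \<Rightarrow> real" where
  "gamma_minus c = (THE g. \<exists>U. is_min_sol c U \<and> U 0 = g)"

definition Iset :: "(param \<times> real) set" where
  "Iset = {(c, g). c \<in> J \<and> gamma_minus c \<le> g \<and> g \<le> gamma_plus c}"

end

theory Submission imports Defs begin

definition FF :: "(real \<Rightarrow> real) \<Rightarrow> real \<Rightarrow> real \<Rightarrow> real" where
  "FF P x u = (P x - 2*x*u - u^2/2) / (1 - x^2)"

definition solg :: "(real \<Rightarrow> real) \<Rightarrow> (real \<Rightarrow> real) \<Rightarrow> bool" where
  "solg P U \<longleftrightarrow> (\<forall>x\<in>{-1<..<1}. (U has_real_derivative FF P x (U x)) (at x))"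

lemma is_sol_solg: "is_sol c U \<longleftrightarrow> solg (Pc c) U"
proof
  assume "is_sol c U"
  then show "solg (Pc c) U" unfolding is_sol_def solg_def
  proof (intro ballI)
    fix x :: real assume h: "\<forall>x\<in>{-1<..<1}. \<exists>d. (U has_real_derivative d) (at x) \<and>
      (1 - x^2) * d + 2 * x * U x + (1/2) * (U x)^2 = Pc c x" and x: "x \<in> {-1<..<1}"
    then obtain d where d: "(U has_real_derivative d) (at x)" "(1 - x^2) * d + 2 * x * U x + (1/2) * (U x)^2 = Pc c x" by blast
    have nz: "1 - x^2 \<noteq> 0" using x by (auto simp: abs_square_eq_1 power2_eq_1_iff)
    have "d = FF (Pc c) x (U x)" unfolding FF_def using d(2) nz by (auto simp: field_simps)
    then show "(U has_real_derivative FF (Pc c) x (U x)) (at x)" using d(1) by simp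
  qed
next
  assume "solg (Pc c) U"
  then show "is_sol c U" unfolding is_sol_def solg_def
  proof (intro ballI)
    fix x :: real assume h: "\<forall>x\<in>{-1<..<1}. (U has_real_derivative FF (Pc c) x (U x)) (at x)" and x: "x \<in> {-1<..<1}"
    have nz: "1 - x^2 \<noteq> 0" using x by (auto simp: power2_eq_1_iff)
    show "\<exists>d. (U has_real_derivative d) (at x) \<and> (1 - x^2) * d + 2 * x * U x + (1/2) * (U x)^2 = Pc c x"
      using h x nz by (intro exI[of _ "FF (Pc c) x (U x)"]) (auto simp: FF_def field_simps)
  qed
qed

definition FV :: "real \<Rightarrow> real \<Rightarrow> real \<Rightarrow> real \<Rightarrow> real" where
  "FV b k t w = (t*(b - k*t) - w^2/2 - 2*t*w) / (t*(2-t))"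

definition solV :: "real \<Rightarrow> real \<Rightarrow> (real \<Rightarrow> real) \<Rightarrow> bool" where
  "solV b k V \<longleftrightarrow> (\<forall>t\<in>{0<..<2}. (V has_real_derivative FV b k t (V t)) (at t))"

lemma solV_of_sol:
  assumes "is_sol c U" "c1 c = -1"
  shows "solV (c2 c + 2*c3 c - 3) (c3 c) (\<lambda>t. U (t-1) - 2)"
  unfolding solV_def
proof
  fix t :: real assume t: "t \<in> {0<..<2}"
  have s: "solg (Pc c) U" using assms is_sol_solg by blast
  have "(U has_real_derivative FF (Pc c) (t-1) (U (t-1))) (at (t + -1))"
    using s t unfolding solg_def by auto
  then have d: "((\<lambda>t. U (t + -1)) has_real_derivative FF (Pc c) (t-1) (U (t-1))) (at t)"
    using DERIV_shift by blast
  have eq: "FF (Pc c) (t-1) (U (t-1)) = FV (c2 c + 2*c3 c - 3) (c3 c) t (U (t-1) - 2)"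
  proof -
    have nz: "t*(2-t) \<noteq> 0" "1 - (t-1)^2 = t*(2-t)" using t by (auto simp: power2_eq_square algebra_simps)
    show ?thesis unfolding FF_def FV_def Pc_def nz(2) using nz(1) assms(2)
      by (simp add: field_simps power2_eq_square)
  qed
  show "((\<lambda>t. U (t-1) - 2) has_real_derivative FV (c2 c + 2*c3 c - 3) (c3 c) t ((\<lambda>t. U (t-1) - 2) t)) (at t)"
    using d eq by (auto intro!: derivative_eq_intros)
qed

lemma solV_cont: "solV b k V \<Longrightarrow> t \<in> {0<..<2} \<Longrightarrow> isCont V t"
  unfolding solV_def using DERIV_isCont by blast

lemma solV_cont_on: "solV b k V \<Longrightarrow> S \<subseteq> {0<..<2} \<Longrightarrow> continuous_on S V"
  using solV_cont by (meson continuous_at_imp_continuous_on subsetD)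

lemma trap_deriv_pos:
  assumes B: "0 \<le> B" "\<bar>b\<bar> \<le> 3*B+3" "\<bar>k\<bar> \<le> B"
  and M: "M = 16*B+16" and z: "0 < z" "z * (M^2+M+B+1) \<le> 1"
  shows "FV b k z (-M*z) + M > 0"
proof -
  have M1: "M \<ge> 16" using M B by simp
  have "M^2 \<ge> 0" by simp
  then have "M^2+M+B+1 \<ge> 1" using M1 B by linarith
  then have "z \<le> z * (M^2+M+B+1)" using z by (simp add: mult_le_cancel_left1)
  then have z2: "z \<le> 1" using z by linarith
  have nz: "z * (2 - z) \<noteq> 0" "2 - z \<noteq> 0" using z z2 by auto
  have eq: "FV b k z (-M*z) + M = (b + 2*M + z*(M - M^2/2 - k)) / (2 - z)"
    using nz unfolding FV_def by (simp add: field_simps power2_eq_square)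
  have MM: "M*M \<ge> 0" by simp
  have a: "\<bar>M - M^2/2 - k\<bar> \<le> M^2+M+B+1" using B M1 MM unfolding power2_eq_square abs_le_iff by linarith
  have "z * \<bar>M - M^2/2 - k\<bar> \<le> z * (M^2+M+B+1)" using a z by (simp add: mult_left_mono)
  then have "z * \<bar>M - M^2/2 - k\<bar> \<le> 1" using z by linarith
  then have "\<bar>z*(M - M^2/2 - k)\<bar> \<le> 1" using z by (simp add: abs_mult)
  then have "z*(M - M^2/2 - k) \<ge> -1" by linarith
  moreover have "b + 2*M \<ge> 2" using B M by linarith
  ultimately show ?thesis unfolding eq using z2 nz by (intro divide_pos_pos) auto
qed

lemma trap:
  assumes sol: "solV b k V" and B: "0 \<le> B" "\<bar>b\<bar> \<le> 3*B+3" "\<bar>k\<bar> \<le> B"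
  and M: "M = 16*B+16" and t1: "t0 * (M^2+M+B+1) \<le> 1"
  and t0: "0 < t0" and v0: "V t0 < -M*t0"
  and t: "0 < t" "t \<le> t0"
  shows "V t < -M*t"
proof (rule ccontr)
  assume "\<not> V t < -M*t"
  then have vt: "0 \<le> V t + M*t" by simp
  have "M^2+M+B+1 \<ge> 1" using M B by (simp add: add_nonneg_nonneg)
  then have "t0 \<le> t0 * (M^2+M+B+1)" using t0 by (simp add: mult_le_cancel_left1)
  then have t01: "t0 < 2" using t1 by linarith
  define f where "f = (\<lambda>z. V z + M*z)"
  define A where "A = {z \<in> {t..t0}. 0 \<le> f z}"
  have cf: "continuous_on {t..t0} f" unfolding f_def using t t01
    by (intro continuous_intros solV_cont_on[OF sol]) auto
  have "closed A" unfolding A_def by (rule continuous_on_closed_Collect_le) (auto intro: continuous_intros cf)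
  moreover have "bounded A" unfolding A_def by (rule bounded_subset[of "{t..t0}"]) auto
  ultimately have cA: "compact A" by (simp add: compact_eq_bounded_closed)
  have "t \<in> A" unfolding A_def f_def using vt t by auto
  then obtain z where zA: "z \<in> A" and zmax: "\<And>y. y \<in> A \<Longrightarrow> y \<le> z"
    using compact_attains_sup[OF cA] by blast
  have zt0: "z < t0"
  proof (rule ccontr)
    assume "\<not> z < t0"
    then have "z = t0" using zA unfolding A_def by auto
    then show False using zA v0 unfolding A_def f_def by auto
  qed
  have zpos: "0 < z" "z \<le> t0" "t \<le> z" using zA t unfolding A_def by auto
  have fz: "0 \<le> f z" using zA unfolding A_def by auto
  have dV: "(V has_real_derivative FV b k z (V z)) (at z)" using sol zpos t01 unfolding solV_def by auto
  have df: "(f has_real_derivative FV b k z (V z) + M) (at z)" unfolding f_def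
    by (auto intro!: derivative_eq_intros dV)
  have nogo: False if d: "d > 0" and h: "\<And>h. h > 0 \<Longrightarrow> h < d \<Longrightarrow> 0 \<le> f (z+h)" for d
  proof -
    define h where "h = min (d/2) ((t0-z)/2)"
    have "h > 0" "h < d" using d zt0 unfolding h_def by auto
    moreover have "h \<le> (t0-z)/2" unfolding h_def by (rule min.cobounded2)
    ultimately have "z + h \<in> A" unfolding A_def using h[of h] zpos by auto
    then show False using zmax[of "z+h"] \<open>h > 0\<close> by simp
  qed
  show False
  proof (cases "f z = 0")
    case True
    then have "V z = -M*z" unfolding f_def by simp
    have "z * (M^2+M+B+1) \<le> t0 * (M^2+M+B+1)"
      using zpos \<open>M^2+M+B+1 \<ge> 1\<close> by (intro mult_right_mono) auto
    then have "FV b k z (V z) + M > 0" using trap_deriv_pos[OF B M zpos(1)] t1 \<open>V z = -M*z\<close> by simp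
    from DERIV_pos_inc_right[OF df this] obtain d where "d > 0" "\<And>h. h > 0 \<Longrightarrow> h < d \<Longrightarrow> f z < f (z+h)" by blast
    then show False using nogo[of d] True by force
  next
    case False
    then have fzp: "f z > 0" using fz by simp
    have "isCont f z" using DERIV_isCont[OF df] .
    then have "\<forall>r>0. \<exists>s>0. \<forall>x. x \<noteq> z \<and> \<bar>x - z\<bar> < s \<longrightarrow> \<bar>f x - f z\<bar> < r"
      unfolding isCont_def LIM_eq by (simp add: dist_real_def)
    then obtain d where d: "d > 0" "\<forall>x. x \<noteq> z \<and> \<bar>x - z\<bar> < d \<longrightarrow> \<bar>f x - f z\<bar> < f z"
      using fzp by blast
    show False
    proof (rule nogo[of d])
      fix h :: real assume "h > 0" "h < d"
      then have "\<bar>f (z+h) - f z\<bar> < f z" using d(2) by (auto elim!: allE[of _ "z+h"])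
      then show "0 \<le> f (z+h)" by simp
    qed (use d in auto)
  qed
qed

lemma Z_identity:
  assumes "0 < s" "s < 2" "v \<noteq> 0"
  shows "s * (- FV b k s v / v^2) = (1/2 + 2* s*(1/v) - s*(b - k* s)*(1/v)^2) / (2 - s)"
  using assms unfolding FV_def by (simp add: field_simps power2_eq_square)

lemma est1_arith:
  fixes s Z f M \<beta> :: real
  assumes "0 < s" "s \<le> 1" "Z < 0" "s*(-Z)*M \<le> 1" "\<bar>f\<bar> \<le> \<beta>" "4*\<beta> \<le> M" "0 < M"
  shows "-((1/2 + 2* s*Z - s*f*Z^2)/(2-s)) + (2 - Z)/4 \<ge> 0"
proof -
  define q where "q = -Z"
  have q: "q > 0" using assms q_def by simp
  have sqM: "s*q \<le> 1/M" using assms(4,7) unfolding q_def by (simp add: field_simps)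
  have "\<bar>s*f*Z^2\<bar> = \<bar>f\<bar> * (s*q) * q" unfolding q_def using assms(1)
    by (simp add: abs_mult power2_eq_square)
  also have "\<dots> \<le> \<beta> * (1/M) * q" using assms q sqM
    by (intro mult_right_mono mult_mono) auto
  also have "\<dots> \<le> q/4" using assms q by (simp add: field_simps)
  finally have b1: "\<bar>s*f*Z^2\<bar> \<le> q/4" .
  define N where "N = 1/2 + 2* s*Z - s*f*Z^2"
  have "2* s*Z \<le> 0" using assms by (simp add: mult_nonneg_nonpos)
  moreover have "-(s * f*Z^2) \<le> q/4" using abs_le_D2[OF b1] .
  ultimately have N: "N \<le> 1/2 + q/4" unfolding N_def by linarith
  have "N/(2-s) \<le> (2+q)/4"
  proof (cases "N \<le> 0")
    case True
    then have "N/(2-s) \<le> 0" using assms by (simp add: divide_nonpos_pos)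
    moreover have "(2+q)/4 > 0" using q by simp
    ultimately show ?thesis by linarith
  next
    case False
    then have "N/(2-s) \<le> N" using assms by (simp add: divide_le_eq)
    moreover have "(2+q)/4 = 1/2 + q/4" by simp
    ultimately show ?thesis using N by linarith
  qed
  then show ?thesis unfolding N_def q_def by simp
qed

lemma est2_arith:
  fixes r q Y f \<beta> s :: real
  assumes "0 < r" "r \<le> 1" "0 \<le> q" "q \<le> Y/r" "\<bar>f\<bar> \<le> \<beta>" "0 \<le> s" "s \<le> 1"
  shows "\<bar>(1/4 + 2*(-q) - f*(-q)^2)/(2-s)\<bar> \<le> (1/4 + 2*Y + \<beta>*Y^2)/r^2"
proof -
  have "q * r \<le> Y" using assms by (simp add: pos_le_divide_eq)
  moreover have "0 \<le> q * r" using assms by simp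
  ultimately have Y: "0 \<le> Y" by linarith
  have r2: "r^2 \<le> r" "0 < r^2" using assms by (auto simp: power2_eq_square mult_le_cancel_left1)
  have "\<bar>1/4 + 2*(-q) - f*(-q)^2\<bar> \<le> 1/4 + 2*q + \<beta>*q^2"
  proof -
    have "\<bar>f*(-q)^2\<bar> \<le> \<beta>*q^2" using assms by (simp add: abs_mult mult_right_mono)
    then show ?thesis using assms by (simp add: abs_le_iff; linarith)
  qed
  also have "\<dots> \<le> (1/4)/r^2 + 2*(Y/r^2) + \<beta>*(Y/r)^2"
  proof -
    have a: "1/4 \<le> (1/4)/r^2" using r2 assms by (simp add: field_simps)
    have "Y/r \<le> Y/r^2" using r2 Y assms(1) by (intro divide_left_mono) auto
    then have b: "q \<le> Y/r^2" using assms by linarith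
    have c: "q^2 \<le> (Y/r)^2" using assms by (intro power_mono) auto
    have "\<beta> \<ge> 0" using assms by linarith
    have "\<beta>*q^2 \<le> \<beta>*(Y/r)^2" using mult_left_mono[OF c \<open>\<beta> \<ge> 0\<close>] .
    then show ?thesis using a b by linarith
  qed
  also have "\<dots> = (1/4 + 2*Y + \<beta>*Y^2)/r^2" using r2 by (simp add: field_simps power2_eq_square)
  finally have num: "\<bar>1/4 + 2*(-q) - f*(-q)^2\<bar> \<le> (1/4 + 2*Y + \<beta>*Y^2)/r^2" .
  have "\<bar>(1/4 + 2*(-q) - f*(-q)^2)/(2-s)\<bar> = \<bar>1/4 + 2*(-q) - f*(-q)^2\<bar>/(2-s)"
    using assms by (simp add: abs_divide)
  also have "\<dots> \<le> \<bar>1/4 + 2*(-q) - f*(-q)^2\<bar>" using assms by (simp add: divide_le_eq mult_le_cancel_left1)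
  finally show ?thesis using num by linarith
qed

lemma final_arith:
  fixes Z L G Lg l3 el :: real
  assumes "Z = L/4 + G" "\<bar>G\<bar> \<le> Lg" "0 \<le> l3" "l3 \<le> 2" "el = L - l3" "el \<le> -(2*(2+4*Lg)+1)"
  shows "\<bar>1/Z - 4/el\<bar> \<le> 8*(2+4*Lg)/el^2"
proof -
  define E where "E = 2+4*Lg"
  have Lg: "Lg \<ge> 0" using assms(2) by linarith
  have el5: "el \<le> -5 - 8*Lg" using assms(6) by simp
  have lneg: "el < 0" using el5 Lg by linarith
  have "el - 4*Z = - l3 - 4*G" using assms(1,5) by simp
  then have e1: "\<bar>el - 4*Z\<bar> \<le> E" unfolding E_def using assms(2-4) by (simp add: abs_le_iff; linarith)
  have "4*Z = el + l3 + 4*G" using assms(1,5) by simp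
  then have e2: "\<bar>4*Z\<bar> \<ge> -el/2" using assms(2-4) Lg el5 by (simp add: abs_le_iff; linarith)
  have Zne: "Z \<noteq> 0" using e2 lneg by auto
  have eq: "1/Z - 4/el = (el - 4*Z)/(Z*el)" using Zne lneg by (simp add: field_simps)
  have den: "\<bar>Z*el\<bar> \<ge> el^2/8"
  proof -
    have "\<bar>Z\<bar> \<ge> -el/8" using e2 by (simp add: abs_mult)
    then have "\<bar>Z\<bar> * (-el) \<ge> (-el/8) * (-el)" using lneg by (intro mult_right_mono) auto
    then show ?thesis using lneg by (simp add: abs_mult power2_eq_square abs_of_neg)
  qed
  have pos: "el^2/8 > 0" using lneg by simp
  have "\<bar>1/Z - 4/el\<bar> = \<bar>el - 4*Z\<bar> / \<bar>Z*el\<bar>" unfolding eq by (simp add: abs_divide)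
  also have "\<dots> \<le> E / (el^2/8)" using e1 den pos by (intro frac_le) auto
  also have "\<dots> = 8*E/el^2" by simp
  finally show ?thesis unfolding E_def .
qed

lemma asym:
  fixes V :: "real \<Rightarrow> real"
  assumes sol: "solV b k V" and B: "0 \<le> B" "\<bar>b\<bar> \<le> 3*B+3" "\<bar>k\<bar> \<le> B"
  and M: "M = 16*B+16" and t0: "0 < t0" "t0 \<le> 1"
  and trapped: "\<And>s. 0 < s \<Longrightarrow> s \<le> t0 \<Longrightarrow> V s < -M* s"
  and Lg: "Lg = 1/(M*t0) + \<bar>ln t0\<bar>/4 + 2*(1/4 + 2*(2 + 1/(M*t0)) + (4*B+3)*(2 + 1/(M*t0))^2)"
  and t: "0 < t" "t \<le> t0" "ln (t/3) \<le> -(2*(2+4*Lg)+1)"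
  shows "\<bar>V t - 4/ln(t/3)\<bar> \<le> 8*(2+4*Lg)/(ln(t/3))^2"
proof -
  define Ym where "Ym = 2 + 1/(M*t0)"
  define D where "D = 1/4 + 2*Ym + (4*B+3)*Ym^2"
  define \<beta> where "\<beta> = 4*B+3"
  define Z where "Z = (\<lambda>s. 1 / V s)"
  define Zd where "Zd = (\<lambda>s. - FV b k s (V s) / (V s)^2)"
  define f where "f = (\<lambda>s. b - k* s)"
  have M0: "M > 0" using M B by simp
  have Vneg: "V s < 0" if "0 < s" "s \<le> t0" for s
  proof -
    have "M * s > 0" using M0 that by simp
    then show ?thesis using trapped[OF that] by linarith
  qed
  have dV: "(V has_real_derivative FV b k s (V s)) (at s)" if "0 < s" "s \<le> t0" for s
    using sol that t0 unfolding solV_def by auto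
  have dZ: "(Z has_real_derivative Zd s) (at s)" if "0 < s" "s \<le> t0" for s
  proof -
    have "((\<lambda>s. inverse (V s)) has_real_derivative (- (FV b k s (V s) * inverse((V s) ^ Suc (Suc 0))))) (at s)"
      using DERIV_inverse_fun[OF dV[OF that]] Vneg[OF that] by simp
    then show ?thesis unfolding Z_def Zd_def by (simp add: inverse_eq_divide power2_eq_square)
  qed
  have idZ: "s * Zd s = (1/2 + 2 * s * Z s - s * f s * (Z s)^2)/(2-s)" if "0 < s" "s \<le> t0" for s
    unfolding Zd_def Z_def f_def using Z_identity[of s "V s" b k] that t0 Vneg[OF that] by simp
  have fb: "\<bar>f s\<bar> \<le> \<beta>" if "0 \<le> s" "s \<le> 1" for s
  proof -
    have "\<bar>k * s\<bar> \<le> B" using that B by (simp add: abs_mult) (metis abs_ge_zero mult_mono' mult.right_neutral order_trans abs_of_nonneg)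
    then show ?thesis unfolding f_def \<beta>_def using B by (simp add: abs_le_iff; linarith)
  qed
  have Mb: "4*\<beta> \<le> M" unfolding \<beta>_def M by simp
  have sZM: "s * (-Z s) * M \<le> 1" if "0 < s" "s \<le> t0" for s
  proof -
    have "M * s < -V s" using trapped[OF that] by simp
    moreover have "M * s > 0" using M0 that by simp
    ultimately have pos: "-V s > 0" by linarith
    have "(M* s) / (-V s) \<le> 1" by (subst divide_le_eq_1_pos[OF pos]) (use \<open>M * s < -V s\<close> in linarith)
    moreover have "s * (-Z s) * M = (M* s) / (-V s)" unfolding Z_def using pos by (simp add: field_simps)
    ultimately show ?thesis by simp
  qed
  define r where "r = (\<lambda>s::real. sqrt (sqrt s))"
  have rpos: "r s > 0" if "s > 0" for s unfolding r_def using that by simp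
  have r2: "r s ^ 2 = sqrt s" if "s \<ge> 0" for s unfolding r_def using that by simp
  have r4: "r s ^ 4 = s" if "s \<ge> 0" for s
  proof -
    have "r s ^ 4 = (r s ^ 2)^2" by simp
    then show ?thesis using r2[OF that] that by simp
  qed
  have rle1: "r s \<le> 1" if "0 \<le> s" "s \<le> 1" for s unfolding r_def using that by simp
  have dr: "(r has_real_derivative 1/(4 * r s ^ 3)) (at s)" if "s > 0" for s
  proof -
    have "(r has_real_derivative inverse (sqrt (sqrt s)) / 2 * (inverse (sqrt s) / 2)) (at s)"
      unfolding r_def using that by (intro DERIV_chain2[OF DERIV_real_sqrt DERIV_real_sqrt]) auto
    moreover have "inverse (sqrt (sqrt s)) / 2 * (inverse (sqrt s) / 2) = 1/(4 * r s ^ 3)"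
    proof -
      have "r s ^ 3 = r s * r s ^ 2" by (simp add: power3_eq_cube power2_eq_square)
      then have "r s ^ 3 = sqrt (sqrt s) * sqrt s" using r2[of s] that unfolding r_def by simp
      then show ?thesis unfolding r_def by (simp add: field_simps)
    qed
    ultimately show ?thesis by (simp add: mult.commute)
  qed
  define y where "y = (\<lambda>s. (2 - Z s) * r s)"
  have ymono: "y s \<le> y t0" if s: "0 < s" "s \<le> t0" for s
  proof (rule DERIV_nonneg_imp_nondecreasing[OF s(2)])
    fix x assume x: "s \<le> x" "x \<le> t0"
    then have x0: "0 < x" using s by linarith
    have d: "(y has_real_derivative (- Zd x) * r x + 1/(4 * r x ^ 3) * (2 - Z x)) (at x)"
      unfolding y_def by (rule derivative_eq_intros dZ[OF x0 x(2)] dr[OF x0] refl)+ simp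
    have rx: "r x > 0" using rpos x0 .
    have eq: "(- Zd x) * r x + 1/(4 * r x ^ 3) * (2 - Z x) = (-(x * Zd x) + (2 - Z x)/4) / r x ^ 3"
    proof -
      have "x = r x ^ 4" using r4 x0 by simp
      then have "-(x * Zd x) = -(r x ^ 4 * Zd x)" by simp
      then show ?thesis using rx by (simp add: field_simps eval_nat_numeral)
    qed
    have "-(x * Zd x) + (2 - Z x)/4 \<ge> 0"
      unfolding idZ[OF x0 x(2)]
      by (rule est1_arith[OF x0 _ _ sZM[OF x0 x(2)] fb Mb M0]) (use x0 x t0 Vneg[OF x0 x(2)] in \<open>auto simp: Z_def\<close>)
    then have "(- Zd x) * r x + 1/(4 * r x ^ 3) * (2 - Z x) \<ge> 0" unfolding eq using rx by simp
    then show "\<exists>y'. (y has_real_derivative y') (at x) \<and> 0 \<le> y'" using d by blast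
  qed
  have Ym0: "y t0 \<le> Ym"
  proof -
    have "-Z t0 \<le> 1/(M*t0)" using sZM[of t0] t0 M0 by (simp add: field_simps)
    then have a: "2 - Z t0 \<le> Ym" unfolding Ym_def by simp
    have "Z t0 < 0" using Vneg[of t0] t0 unfolding Z_def by (simp add: divide_less_0_iff)
    then have b: "2 - Z t0 \<ge> 0" by linarith
    have "y t0 \<le> (2 - Z t0) * 1" unfolding y_def using rle1[of t0] t0 b by (intro mult_left_mono) auto
    then show ?thesis using a by simp
  qed
  have qb: "-Z s \<le> Ym / r s" if s: "0 < s" "s \<le> t0" for s
  proof -
    have "(2 - Z s) * r s \<le> Ym" using ymono[OF s] Ym0 unfolding y_def by simp
    moreover have "(-Z s) * r s \<le> (2 - Z s) * r s" using rpos[OF s(1)] by (intro mult_right_mono) auto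
    ultimately have "(-Z s) * r s \<le> Ym" by linarith
    then show ?thesis using rpos[OF s(1)] by (simp add: pos_le_divide_eq)
  qed
  define G where "G = (\<lambda>s. Z s - ln s / 4)"
  define Gd where "Gd = (\<lambda>s. Zd s - 1/(4* s))"
  have dG: "(G has_real_derivative Gd s) (at s)" if s: "0 < s" "s \<le> t0" for s
    unfolding G_def Gd_def using s by (auto intro!: derivative_eq_intros dZ)
  have Gdb: "\<bar>Gd s\<bar> \<le> D / sqrt s" if s: "0 < s" "s \<le> t0" for s
  proof -
    have s2: "s < 2" using s t0 by simp
    have "Gd s = (1/4 + 2*(Z s) - f s*(Z s)^2)/(2-s)"
    proof -
      have "Zd s = (1/2 + 2 * s * Z s - s * f s * (Z s)^2)/(2-s) / s" using s by (simp add: idZ[OF s, symmetric])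
      then show ?thesis unfolding Gd_def using s s2 by (simp add: field_simps)
    qed
    also have "\<dots> = (1/4 + 2*(-(-Z s)) - f s*(-(-Z s))^2)/(2-s)" by simp
    finally have e: "\<bar>Gd s\<bar> = \<bar>(1/4 + 2*(-(-Z s)) - f s*(-(-Z s))^2)/(2-s)\<bar>" by simp
    have "-Z s \<ge> 0" using Vneg[OF s] unfolding Z_def by (simp add: divide_less_0_iff less_imp_le)
    then have "\<bar>Gd s\<bar> \<le> (1/4 + 2*Ym + \<beta>*Ym^2)/(r s)^2" unfolding e
      by (intro est2_arith rpos rle1 qb s fb) (use s t0 in auto)
    then show ?thesis unfolding D_def \<beta>_def using r2[of s] s by simp
  qed
  have D0: "D \<ge> 0" unfolding D_def Ym_def using B M0 t0 by (simp add: add_nonneg_nonneg)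
  have Hp: "G t + 2*D* sqrt t \<le> G t0 + 2*D* sqrt t0"
  proof (rule DERIV_nonneg_imp_nondecreasing[OF t(2)])
    fix x assume x: "t \<le> x" "x \<le> t0"
    then have x0: "0 < x" using t by linarith
    have d: "((\<lambda>x. G x + 2*D* sqrt x) has_real_derivative Gd x + 2*D*(inverse (sqrt x) / 2)) (at x)"
      by (rule derivative_eq_intros dG[OF x0 x(2)] DERIV_real_sqrt[OF x0] refl)+ simp
    have "Gd x + 2*D*(inverse (sqrt x) / 2) = Gd x + D / sqrt x" by (simp add: field_simps)
    moreover have "Gd x + D / sqrt x \<ge> 0" using Gdb[OF x0 x(2)] by (simp add: abs_le_iff)
    ultimately show "\<exists>y'. ((\<lambda>x. G x + 2*D* sqrt x) has_real_derivative y') (at x) \<and> 0 \<le> y'" using d by auto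
  qed
  have Hm: "G t - 2*D* sqrt t \<ge> G t0 - 2*D* sqrt t0"
  proof (rule DERIV_nonpos_imp_nonincreasing[OF t(2)])
    fix x assume x: "t \<le> x" "x \<le> t0"
    then have x0: "0 < x" using t by linarith
    have d: "((\<lambda>x. G x - 2*D* sqrt x) has_real_derivative Gd x - 2*D*(inverse (sqrt x) / 2)) (at x)"
      by (rule derivative_eq_intros dG[OF x0 x(2)] DERIV_real_sqrt[OF x0] refl)+ simp
    have "Gd x - 2*D*(inverse (sqrt x) / 2) = Gd x - D / sqrt x" by (simp add: field_simps)
    moreover have "Gd x - D / sqrt x \<le> 0" using Gdb[OF x0 x(2)] by (simp add: abs_le_iff)
    ultimately show "\<exists>y'. ((\<lambda>x. G x - 2*D* sqrt x) has_real_derivative y') (at x) \<and> y' \<le> 0" using d by auto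
  qed
  have sq: "0 \<le> sqrt t" "sqrt t0 \<le> 1" using t t0 by auto
  have "2*D* sqrt t0 \<le> 2*D" using sq D0 by (simp add: mult_left_le)
  moreover have "2*D* sqrt t \<ge> 0" using sq D0 by simp
  ultimately have Gt: "\<bar>G t - G t0\<bar> \<le> 2*D" using Hp Hm by (simp add: abs_le_iff; linarith)
  have Gt0: "\<bar>G t0\<bar> \<le> 1/(M*t0) + \<bar>ln t0\<bar>/4"
  proof -
    have "-Z t0 \<le> 1/(M*t0)" using sZM[of t0] t0 M0 by (simp add: field_simps)
    moreover have "-Z t0 \<ge> 0" using Vneg[of t0] t0 unfolding Z_def by (simp add: divide_less_0_iff less_imp_le)
    ultimately show ?thesis unfolding G_def by (simp add: abs_le_iff; linarith)
  qed
  have GLg: "\<bar>G t\<bar> \<le> Lg" using Gt Gt0 unfolding Lg D_def Ym_def by (simp add: abs_le_iff; linarith)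
  have l3: "0 \<le> ln (3::real)" "ln (3::real) \<le> 2" using ln_le_minus_one[of 3] by auto
  have "\<bar>1 / Z t - 4 / ln (t/3)\<bar> \<le> 8*(2+4*Lg)/(ln(t/3))^2"
  proof -
    have e1: "Z t = ln t / 4 + G t" unfolding G_def by simp
    have e2: "ln (t/3) = ln t - ln 3" using t by (simp add: ln_div)
    show ?thesis using final_arith[OF e1 GLg l3(1) l3(2) e2 t(3)] .
  qed
  moreover have "1 / Z t = V t" unfolding Z_def by simp
  ultimately show ?thesis by simp
qed

lemma FV_diff:
  assumes "0 < s" "s < 2"
  shows "FV b k s v2 - FV b k s v = -(v2 - v)*((v + v2)/2 + 2* s)/(s*(2-s))"
proof -
  have "FV b k s v2 - FV b k s v = ((s*(b-k* s) - v2^2/2 - 2* s* v2) - (s*(b-k* s) - v^2/2 - 2* s* v))/(s*(2-s))"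
    unfolding FV_def by (simp only: diff_divide_distrib)
  also have "(s*(b-k* s) - v2^2/2 - 2* s* v2) - (s*(b-k* s) - v^2/2 - 2* s* v) = -(v2 - v)*((v + v2)/2 + 2* s)"
    by (simp add: field_simps power2_eq_square)
  finally show ?thesis .
qed

lemma cont_bound:
  fixes f :: "real \<Rightarrow> real"
  assumes "continuous_on {a..b} f"
  obtains R where "R \<ge> 0" "\<And>x. x \<in> {a..b} \<Longrightarrow> \<bar>f x\<bar> \<le> R"
proof -
  have "compact (f ` {a..b})" using assms by (intro compact_continuous_image) auto
  then have "bounded (f ` {a..b})" by (rule compact_imp_bounded)
  then obtain R where "\<forall>y\<in>f ` {a..b}. norm y \<le> R" unfolding bounded_iff by blast
  then have R: "\<And>x. x \<in> {a..b} \<Longrightarrow> \<bar>f x\<bar> \<le> R" by auto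
  show ?thesis using that[of "max R 0"] R by force
qed

lemma W_nonzero:
  assumes s1: "solV b k V" and s2: "solV b k V2"
  and T: "0 < T" "T < 2" and WT: "V2 T > V T" and a: "0 < a" "a \<le> T"
  shows "V2 a > V a"
proof -
  define W where "W = (\<lambda>s. V2 s - V s)"
  have dW: "(W has_real_derivative -(W s)*((V s + V2 s)/2 + 2* s)/(s*(2-s))) (at s)" if "0 < s" "s < 2" for s
  proof -
    have "(W has_real_derivative FV b k s (V2 s) - FV b k s (V s)) (at s)"
      unfolding W_def using s1 s2 that unfolding solV_def by (auto intro!: derivative_eq_intros)
    then show ?thesis using FV_diff[OF that] unfolding W_def by simp
  qed
  have cW: "continuous_on {x..T} W" if "0 < x" for x
    unfolding W_def using that T by (intro continuous_intros solV_cont_on[OF s1] solV_cont_on[OF s2]) auto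
  have nz: "W x \<noteq> 0" if x: "0 < x" "x \<le> T" for x
  proof -
    have "continuous_on {x..T} (\<lambda>s. \<bar>V s\<bar> + \<bar>V2 s\<bar>)" using x T
      by (intro continuous_intros solV_cont_on[OF s1] solV_cont_on[OF s2]) auto
    then obtain R where R: "R \<ge> 0" "\<And>s. s \<in> {x..T} \<Longrightarrow> \<bar>\<bar>V s\<bar> + \<bar>V2 s\<bar>\<bar> \<le> R" using cont_bound by blast
    define L where "L = (R/2 + 4)/(x*(2-T))"
    have Lpos: "L \<ge> 0" unfolding L_def using R x T by simp
    have Wd: "W s * (-(W s)*((V s + V2 s)/2 + 2* s)/(s*(2-s))) \<le> L * (W s)^2" if s: "x \<le> s" "s \<le> T" for s
    proof -
      have s0: "0 < s" "s < 2" using s x T by auto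
      have h: "\<bar>V s\<bar> + \<bar>V2 s\<bar> \<le> R" using R(2)[of s] s by auto
      have "\<bar>(V s+V2 s)/2 + 2* s\<bar> \<le> \<bar>(V s+V2 s)/2\<bar> + \<bar>2* s\<bar>" by (rule abs_triangle_ineq)
      moreover have "\<bar>(V s+V2 s)/2\<bar> = \<bar>V s+V2 s\<bar>/2" by simp
      moreover have "\<bar>V s + V2 s\<bar> \<le> \<bar>V s\<bar> + \<bar>V2 s\<bar>" by (rule abs_triangle_ineq)
      moreover have "\<bar>2* s\<bar> \<le> 4" using s0 by simp
      ultimately have "\<bar>(V s + V2 s)/2 + 2* s\<bar> \<le> R/2 + 4" using h by linarith
      moreover have "s*(2-s) \<ge> x*(2-T)" using s x T by (intro mult_mono) auto
      moreover have "x*(2-T) > 0" using x T by simp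
      ultimately have "\<bar>(V s + V2 s)/2 + 2* s\<bar> / (s*(2-s)) \<le> L" unfolding L_def
        by (intro frac_le) auto
      then have "\<bar>((V s + V2 s)/2 + 2* s)/(s*(2-s))\<bar> \<le> L" using s0 by (simp add: abs_divide abs_mult)
      then have "-(((V s + V2 s)/2 + 2* s)/(s*(2-s))) \<le> L" by (rule abs_le_D2)
      then have "(W s)^2 * (-(((V s + V2 s)/2 + 2* s)/(s*(2-s)))) \<le> (W s)^2 * L" by (rule mult_left_mono) simp
      then have "-((W s)^2) * (((V s + V2 s)/2 + 2* s)/(s*(2-s))) \<le> (W s)^2 * L" by simp
      then show ?thesis by (simp add: power2_eq_square algebra_simps)
    qed
    define \<phi> where "\<phi> = (\<lambda>s. (W s)^2 * exp (-2*L* s))"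
    have "\<phi> T \<le> \<phi> x"
    proof (rule DERIV_nonpos_imp_nonincreasing[OF x(2)])
      fix s assume s: "x \<le> s" "s \<le> T"
      have s0: "0 < s" "s < 2" using s x T by auto
      have d: "(\<phi> has_real_derivative 2 * W s * (-(W s)*((V s + V2 s)/2 + 2* s)/(s*(2-s))) * exp (-2*L* s) + (W s)^2 * (exp (-2*L* s) * (-2*L))) (at s)"
        unfolding \<phi>_def by (rule derivative_eq_intros dW[OF s0] refl)+ simp
      have "2 * W s * (-(W s)*((V s + V2 s)/2 + 2* s)/(s*(2-s))) * exp (-2*L* s) + (W s)^2 * (exp (-2*L* s) * (-2*L))
          = 2 * exp (-2*L* s) * (W s * (-(W s)*((V s + V2 s)/2 + 2* s)/(s*(2-s))) - L * (W s)^2)"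
        by (simp add: algebra_simps)
      also have "\<dots> \<le> 0" using Wd[OF s] by (intro mult_nonneg_nonpos) auto
      finally show "\<exists>y. (\<phi> has_real_derivative y) (at s) \<and> y \<le> 0" using d by blast
    qed
    moreover have "\<phi> T > 0" unfolding \<phi>_def W_def using WT by simp
    ultimately have "\<phi> x > 0" by linarith
    then show ?thesis unfolding \<phi>_def by auto
  qed
  show ?thesis
  proof (rule ccontr)
    assume "\<not> V2 a > V a"
    then have "W a \<le> 0" unfolding W_def by simp
    moreover have "0 \<le> W T" unfolding W_def using WT by simp
    ultimately obtain z where z: "a \<le> z" "z \<le> T" "W z = 0" using IVT'[of W a 0 T] cW[OF a(1)] a by blast
    then show False using nz[of z] a by simp
  qed
qed

lemma W_deriv:
  assumes s1: "solV b k V" and s2: "solV b k V2" and s: "0 < s" "s < 2"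
  shows "((\<lambda>s. V2 s - V s) has_real_derivative -(V2 s - V s)*((V s + V2 s)/2 + 2* s)/(s*(2-s))) (at s)"
proof -
  have "((\<lambda>s. V2 s - V s) has_real_derivative FV b k s (V2 s) - FV b k s (V s)) (at s)"
    using s1 s2 s unfolding solV_def by (auto intro!: derivative_eq_intros)
  then show ?thesis using FV_diff[OF s] by simp
qed

lemma above_max:
  assumes s1: "solV b k V" and s2: "solV b k V2" and M: "M > 0" and t1: "0 < t1" "t1 \<le> 1"
  and low: "\<And>s. 0 < s \<Longrightarrow> s \<le> t1 \<Longrightarrow> -M* s \<le> V s"
  and T: "0 < T" "T < 2"
  shows "V2 T \<le> V T"
proof (rule ccontr)
  assume "\<not> V2 T \<le> V T"
  then have WT: "V2 T > V T" by simp
  define W where "W = (\<lambda>s. V2 s - V s)"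
  define Wd where "Wd = (\<lambda>s. -(V2 s - V s)*((V s + V2 s)/2 + 2* s)/(s*(2-s)))"
  have dW: "(W has_real_derivative Wd s) (at s)" if "0 < s" "s < 2" for s
    unfolding W_def Wd_def using W_deriv[OF s1 s2 that] .
  define t2 where "t2 = min t1 T"
  have t2: "0 < t2" "t2 \<le> t1" "t2 \<le> T" "t2 \<le> 1" unfolding t2_def using t1 T by auto
  have Wpos: "W s > 0" if "0 < s" "s \<le> T" for s
    unfolding W_def using W_nonzero[OF s1 s2 T WT that] by simp
  have WdM: "Wd s \<le> M * W s" if s: "0 < s" "s \<le> t2" for s
  proof -
    have s0: "s < 2" "s \<le> 1" using s t2 by auto
    have Ws: "W s > 0" using Wpos s t2 by simp
    have "(V s + V2 s)/2 \<ge> V s" using Ws unfolding W_def by simp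
    then have A: "(V s + V2 s)/2 + 2* s \<ge> -M* s" using low[of s] s t2 by linarith
    have "-(W s) * ((V s + V2 s)/2 + 2* s) \<le> W s * (M* s)"
      using mult_left_mono[OF A, of "W s"] Ws by simp
    moreover have den: "s*(2-s) > 0" using s s0 by simp
    ultimately have "(-(W s) * ((V s + V2 s)/2 + 2* s)) / (s*(2-s)) \<le> W s * (M* s) / (s*(2-s))"
      by (intro divide_right_mono) auto
    moreover have "Wd s = (-(W s) * ((V s + V2 s)/2 + 2* s)) / (s*(2-s))" unfolding Wd_def W_def by simp
    ultimately have "Wd s \<le> W s * (M* s) / (s*(2-s))" by simp
    also have "\<dots> = M * W s / (2 - s)" using s s0 by (simp add: field_simps)
    also have "\<dots> \<le> M * W s"
    proof -
      have mw: "M * W s > 0" using M Ws by simp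
      then show ?thesis using s0 by (simp add: divide_le_eq mult_le_cancel_left1)
    qed
    finally show ?thesis .
  qed
  define w0 where "w0 = W t2 * exp (-M*t2)"
  have w0: "w0 > 0" unfolding w0_def using Wpos t2 by simp
  have Wlow: "W s \<ge> w0" if s: "0 < s" "s \<le> t2" for s
  proof -
    have "W t2 * exp (-M*t2) \<le> W s * exp (-M* s)"
    proof (rule DERIV_nonpos_imp_nonincreasing[OF s(2)])
      fix x assume x: "s \<le> x" "x \<le> t2"
      have x0: "0 < x" "x < 2" using x s t2 by auto
      have d: "((\<lambda>x. W x * exp (-M*x)) has_real_derivative Wd x * exp (-M*x) + W x * (exp (-M*x) * (-M))) (at x)"
        by (rule derivative_eq_intros dW[OF x0] refl)+ simp
      have "Wd x * exp (-M*x) + W x * (exp (-M*x) * (-M)) = exp (-M*x) * (Wd x - M * W x)" by (simp add: algebra_simps)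
      also have "\<dots> \<le> 0" using WdM[of x] x0 x by (intro mult_nonneg_nonpos) auto
      finally show "\<exists>y. ((\<lambda>x. W x * exp (-M*x)) has_real_derivative y) (at x) \<and> y \<le> 0" using d by blast
    qed
    moreover have "W s * exp (-M* s) \<le> W s"
      using Wpos[of s] s t2 M by (simp add: mult_le_cancel_left1)
    ultimately show ?thesis unfolding w0_def by linarith
  qed
  define t3 where "t3 = min t2 (w0/(4*M))"
  have t3: "0 < t3" "t3 \<le> t2" "t3 \<le> w0/(4*M)" unfolding t3_def using t2 w0 M by auto
  have Wd2: "Wd s \<le> -((W s)^2/(8* s))" if s: "0 < s" "s \<le> t3" for s
  proof -
    have s0: "s < 2" "s \<le> 1" "s \<le> t2" using s t3 t2 by auto
    have Ws: "W s > 0" "W s \<ge> w0" using Wpos Wlow s s0 t2 by auto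
    have "M* s \<le> M*(w0/(4*M))" using s t3 M by (intro mult_left_mono) auto
    then have "M* s \<le> w0/4" using M by simp
    moreover have "(V s + V2 s)/2 = V s + W s / 2" unfolding W_def by (simp add: field_simps)
    moreover have "-M* s \<le> V s" using low[of s] s s0 t2 by simp
    ultimately have A: "(V s + V2 s)/2 + 2* s \<ge> W s / 4" using Ws s by linarith
    have "W s * (W s / 4) \<le> W s * ((V s + V2 s)/2 + 2* s)" using mult_left_mono[OF A] Ws by simp
    moreover have "s*(2-s) \<le> 2* s" using s by simp
    moreover have "s*(2-s) > 0" using s s0 by simp
    moreover have "0 \<le> W s * ((V s + V2 s)/2 + 2* s)"
    proof -
      have "0 \<le> (V s + V2 s)/2 + 2* s" using A Ws by linarith
      then show ?thesis using Ws by simp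
    qed
    ultimately have "(W s * (W s / 4)) / (2* s) \<le> (W s * ((V s + V2 s)/2 + 2* s)) / (s*(2-s))"
      using Ws by (intro frac_le) auto
    moreover have "Wd s = -((W s * ((V s + V2 s)/2 + 2* s)) / (s*(2-s)))"
      unfolding Wd_def W_def by (simp only: minus_mult_left minus_divide_left)
    moreover have "(W s * (W s / 4)) / (2* s) = (W s)^2/(8* s)" by (simp add: power2_eq_square)
    ultimately show "Wd s \<le> -((W s)^2/(8* s))" by linarith
  qed
  define sx where "sx = t3 * exp (-8/W t3 - 8)"
  have Wt3: "W t3 > 0" using Wpos t3 t2 by simp
  have "8/W t3 \<ge> 0" using Wt3 by simp
  moreover have "-8/W t3 = -(8/W t3)" by simp
  ultimately have "-8/W t3 - 8 \<le> 0" by linarith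
  then have ex1: "exp (-8/W t3 - 8) \<le> 1" by simp
  have sx: "0 < sx" "sx \<le> t3" unfolding sx_def using t3 ex1 by (auto intro: mult_left_le)
  have "inverse (W sx) - ln sx/8 \<le> inverse (W t3) - ln t3/8"
  proof (rule DERIV_nonneg_imp_nondecreasing[OF sx(2)])
    fix x assume x: "sx \<le> x" "x \<le> t3"
    have x0: "0 < x" "x < 2" "x \<le> T" using x sx t3 t2 by auto
    have Wx: "W x > 0" using Wpos x0 by simp
    have d1: "((\<lambda>x. inverse (W x)) has_real_derivative -(Wd x * inverse ((W x)^Suc (Suc 0)))) (at x)"
      by (rule DERIV_inverse_fun[OF dW[OF x0(1,2)]]) (use Wx in simp)
    have d2: "(ln has_real_derivative inverse x) (at x)" by (rule DERIV_ln) (rule x0)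
    have d: "((\<lambda>x. inverse (W x) - ln x/8) has_real_derivative -(Wd x * inverse ((W x)^Suc (Suc 0))) - inverse x/8) (at x)"
      using DERIV_diff[OF d1 DERIV_cdivide[OF d2, of 8]] .
    have "(W x)^2/(8*x) \<le> -(Wd x)" using Wd2[of x] x0 x by linarith
    then have "((W x)^2/(8*x)) * inverse ((W x)^2) \<le> (-(Wd x)) * inverse ((W x)^2)"
      by (rule mult_right_mono) simp
    moreover have "((W x)^2/(8*x)) * inverse ((W x)^2) = inverse x/8" using Wx x0 by (simp add: field_simps)
    moreover have "(-(Wd x)) * inverse ((W x)^2) = -(Wd x * inverse ((W x)^Suc (Suc 0)))"
      by (simp add: numeral_2_eq_2)
    ultimately have "0 \<le> -(Wd x * inverse ((W x)^Suc (Suc 0))) - inverse x/8" by linarith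
    then show "\<exists>y. ((\<lambda>x. inverse (W x) - ln x/8) has_real_derivative y) (at x) \<and> 0 \<le> y" using d by blast
  qed
  moreover have "ln sx = ln t3 + (-8/W t3 - 8)" unfolding sx_def using t3 by (simp add: ln_mult)
  moreover have "(ln t3 + (-8/W t3 - 8))/8 = ln t3/8 - inverse (W t3) - 1" using Wt3 by (simp add: field_simps)
  ultimately have "ln sx/8 = ln t3/8 - inverse (W t3) - 1" "inverse (W sx) - ln sx/8 \<le> inverse (W t3) - ln t3/8" by simp_all
  then have "inverse (W sx) \<le> -1" by linarith
  moreover have "W sx > 0" using Wpos[of sx] sx t3 t2 by simp
  then have "inverse (W sx) > 0" by simp
  ultimately show False by linarith
qed

lemma max_of_low:
  assumes sol: "is_sol c U" and c: "c1 c = -1" and M: "M > 0" and t1: "0 < t1" "t1 \<le> 1"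
  and low: "\<And>s. 0 < s \<Longrightarrow> s \<le> t1 \<Longrightarrow> -M* s \<le> U (s-1) - 2"
  shows "is_max_sol c U"
  unfolding is_max_sol_def
proof (intro conjI allI impI ballI)
  show "is_sol c U" by fact
  fix U2 and x :: real assume s2: "is_sol c U2" and x: "x \<in> {-1<..<1}"
  have "(\<lambda>t. U2 (t-1) - 2) (x+1) \<le> (\<lambda>t. U (t-1) - 2) (x+1)"
    by (rule above_max[OF solV_of_sol[OF sol c] solV_of_sol[OF s2 c] M t1 low]) (use x in auto)
  then show "U2 x \<le> U x" by simp
qed

lemma gamma_plus_eq:
  assumes "is_max_sol c U"
  shows "gamma_plus c = U 0"
  unfolding gamma_plus_def
proof (rule the_equality)
  show "\<exists>U'. is_max_sol c U' \<and> U' 0 = U 0" using assms by blast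
next
  fix g assume "\<exists>U'. is_max_sol c U' \<and> U' 0 = g"
  then obtain U' where U': "is_max_sol c U'" "U' 0 = g" by blast
  have "U' 0 \<le> U 0" using assms U'(1) unfolding is_max_sol_def by auto
  moreover have "U 0 \<le> U' 0" using assms U'(1) unfolding is_max_sol_def by auto
  ultimately show "g = U 0" using U' by simp
qed

lemma solg_cont: "solg P U \<Longrightarrow> x \<in> {-1<..<1} \<Longrightarrow> isCont U x"
  unfolding solg_def using DERIV_isCont by blast

lemma solg_cont_on: "solg P U \<Longrightarrow> S \<subseteq> {-1<..<1} \<Longrightarrow> continuous_on S U"
  using solg_cont by (meson continuous_at_imp_continuous_on subsetD)

lemma FF_neg:
  assumes x: "-1 < x" "x < 1" and P: "\<bar>P x\<bar> \<le> Q" and u: "u \<ge> 8 + Q" and Q: "Q \<ge> 0"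
  shows "FF P x u \<le> -(u^2/4)"
proof -
  have d: "0 < 1 - x^2" "1 - x^2 \<le> 1" using x by (auto simp: abs_square_less_1)
  have "u*(8+Q) \<le> u*u" by (rule mult_left_mono) (use u Q in auto)
  moreover have "u*(8+Q) = 8*u + u*Q" by (simp add: algebra_simps)
  ultimately have f1: "8*u + u*Q \<le> u*u" by simp
  have f2: "8*Q \<le> u*Q" by (rule mult_right_mono) (use u Q in auto)
  have "(-x)*u \<le> 1*u" by (rule mult_right_mono) (use x u Q in auto)
  moreover have "-(2*x*u) = 2*((-x)*u)" by simp
  ultimately have f3: "-(2*x*u) \<le> 2*u" by linarith
  have f4: "P x \<le> Q" using P by simp
  have "P x - 2*x*u - u*u/2 \<le> -(u*u/4)" using f1 f2 f3 f4 Q by linarith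
  then have N: "P x - 2*x*u - u^2/2 \<le> -(u^2/4)" by (simp add: power2_eq_square)
  have "FF P x u = (P x - 2*x*u - u^2/2)/(1-x^2)" unfolding FF_def ..
  also have "\<dots> \<le> -(u^2/4) / (1-x^2)" using N d by (intro divide_right_mono) auto
  also have "\<dots> \<le> -(u^2/4)"
  proof -
    have a: "(u^2/4) * (1 - x^2) \<le> (u^2/4) * 1" by (rule mult_left_mono) (use d in auto)
    have "u^2/4 \<le> (u^2/4)/(1-x^2)" using a d(1) by (subst pos_le_divide_eq) simp_all
    then show ?thesis by simp
  qed
  finally show ?thesis .
qed

lemma apriori_upper:
  assumes sol: "solg P U" and Pb: "\<And>x. x \<in> {-1<..<1} \<Longrightarrow> \<bar>P x\<bar> \<le> Q" and Q: "Q \<ge> 0"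
  and x0: "-1 < x0" "x0 < 1"
  shows "U x0 \<le> max (8+Q) (4/(1+x0))"
proof (rule ccontr)
  define u0 where "u0 = U x0"
  assume "\<not> U x0 \<le> max (8+Q) (4/(1+x0))"
  then have u0: "u0 > 8+Q" "u0 > 4/(1+x0)" unfolding u0_def by auto
  have dU: "(U has_real_derivative FF P x (U x)) (at x)" if "-1 < x" "x < 1" for x
    using sol that unfolding solg_def by auto
  have neg: "FF P x (U x) \<le> -((U x)^2/4)" if "-1 < x" "x < 1" "U x \<ge> 8+Q" for x
  proof -
    have "\<bar>P x\<bar> \<le> Q" using Pb that by auto
    from FF_neg[of x P Q "U x", OF that(1,2) this that(3) Q] show ?thesis .
  qed
  have claim1: "U y \<ge> u0" if y: "-1 < y" "y \<le> x0" for y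
  proof (rule ccontr)
    assume "\<not> U y \<ge> u0"
    then have Uy: "U y < u0" by simp
    define u1 where "u1 = max (U y) (8+Q)"
    have u1: "u1 < u0" "u1 \<ge> 8+Q" unfolding u1_def using Uy u0 by auto
    define A where "A = {z \<in> {y..x0}. U z \<le> u1}"
    have cU: "continuous_on {y..x0} U" using y x0 by (intro solg_cont_on[OF sol]) auto
    have "closed A" unfolding A_def by (rule continuous_on_closed_Collect_le[OF cU]) (auto intro: continuous_intros)
    moreover have "bounded A" unfolding A_def by (rule bounded_subset[of "{y..x0}"]) auto
    ultimately have cA: "compact A" by (simp add: compact_eq_bounded_closed)
    have "y \<in> A" unfolding A_def u1_def using y by auto
    then obtain z where zA: "z \<in> A" and zmax: "\<And>w. w \<in> A \<Longrightarrow> w \<le> z"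
      using compact_attains_sup[OF cA] by blast
    have z: "y \<le> z" "z \<le> x0" "U z \<le> u1" using zA unfolding A_def by auto
    have zx0: "z < x0" using z u1 unfolding u0_def by (metis order.not_eq_order_implies_strict order.strict_iff_not)
    have "\<exists>\<xi>. z < \<xi> \<and> \<xi> < x0 \<and> U x0 - U z = (x0 - z) * FF P \<xi> (U \<xi>)"
      by (rule MVT2[OF zx0]) (rule dU, use y z x0 in auto)
    then obtain \<xi> where xi: "z < \<xi>" "\<xi> < x0" "U x0 - U z = (x0 - z) * FF P \<xi> (U \<xi>)" by blast
    have "\<xi> \<notin> A" using zmax[of \<xi>] xi by force
    then have "U \<xi> > u1" unfolding A_def using xi z by auto
    then have "FF P \<xi> (U \<xi>) \<le> -((U \<xi>)^2/4)" using neg[of \<xi>] xi y z u1 x0 by auto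
    moreover have "(U \<xi>)^2/4 > 0" using \<open>U \<xi> > u1\<close> u1 Q by auto
    ultimately have "FF P \<xi> (U \<xi>) < 0" by linarith
    then have "(x0 - z) * FF P \<xi> (U \<xi>) < 0" using zx0 by (simp add: mult_pos_neg)
    moreover have "U x0 - U z > 0" using z u1 unfolding u0_def by simp
    ultimately show False using xi by simp
  qed
  define y0 where "y0 = (x0 - 4/u0 - 1)/2"
  have u0p: "u0 > 0" using u0 Q by simp
  have "4/u0 < 1 + x0" using u0 x0 u0p by (simp add: field_simps)
  then have y0: "-1 < y0" "y0 < x0 - 4/u0" unfolding y0_def by auto
  have "4/u0 > 0" using u0p by simp
  then have y0x: "y0 \<le> x0" using y0 by linarith
  have "inverse (U y0) - y0/4 \<le> inverse (U x0) - x0/4"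
  proof (rule DERIV_nonneg_imp_nondecreasing[OF y0x])
    fix x assume x: "y0 \<le> x" "x \<le> x0"
    have x1: "-1 < x" "x < 1" using x y0 x0 by auto
    have Ux: "U x \<ge> u0" using claim1[of x] x1 x by auto
    have Uxp: "U x > 0" using Ux u0p by linarith
    have d: "((\<lambda>x. inverse (U x) - x/4) has_real_derivative -(FF P x (U x) * inverse ((U x)^Suc (Suc 0))) - 1/4) (at x)"
      using DERIV_diff[OF DERIV_inverse_fun[OF dU[OF x1]] DERIV_cdivide[OF DERIV_ident, of 4]] Uxp by simp
    have "FF P x (U x) \<le> -((U x)^2/4)" using neg[OF x1] Ux u0 by simp
    then have "-(FF P x (U x)) * inverse ((U x)^2) \<ge> ((U x)^2/4) * inverse ((U x)^2)"
      by (intro mult_right_mono) auto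
    moreover have "((U x)^2/4) * inverse ((U x)^2) = 1/4" using Uxp by simp
    moreover have "-(FF P x (U x)) * inverse ((U x)^2) = -(FF P x (U x) * inverse ((U x)^Suc (Suc 0)))"
      by (simp add: numeral_2_eq_2)
    ultimately have "0 \<le> -(FF P x (U x) * inverse ((U x)^Suc (Suc 0))) - 1/4" by linarith
    then show "\<exists>y. ((\<lambda>x. inverse (U x) - x/4) has_real_derivative y) (at x) \<and> 0 \<le> y" using d by blast
  qed
  moreover have "(x0 - y0)/4 = x0/4 - y0/4" by (simp add: diff_divide_distrib)
  ultimately have "inverse (U y0) \<le> inverse u0 - (x0 - y0)/4" unfolding u0_def by linarith
  moreover have "(x0 - y0)/4 > inverse u0" using y0 u0p by (simp add: field_simps)
  moreover have "inverse (U y0) > 0" using claim1[of y0] y0 y0x u0p by simp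
  ultimately show False by linarith
qed

lemma solg_reflect:
  assumes "solg P U"
  shows "solg (\<lambda>y. P (-y)) (\<lambda>y. - U (-y))"
  unfolding solg_def
proof
  fix y :: real assume y: "y \<in> {-1<..<1}"
  have "(U has_real_derivative FF P (-y) (U (-y))) (at (-y))" using assms y unfolding solg_def by auto
  then have "((\<lambda>x. U (-x)) has_real_derivative - FF P (-y) (U (-y))) (at y)" using DERIV_mirror by blast
  then have "((\<lambda>x. - U (-x)) has_real_derivative FF P (-y) (U (-y))) (at y)" using DERIV_minus by fastforce
  moreover have "FF P (-y) (U (-y)) = FF (\<lambda>y. P (-y)) y (- U (-y))" unfolding FF_def by simp
  ultimately show "((\<lambda>y. - U (-y)) has_real_derivative FF (\<lambda>y. P (-y)) y ((\<lambda>y. - U (-y)) y)) (at y)" by simp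
qed

lemma apriori_abs:
  assumes sol: "solg P U" and Pb: "\<And>x. x \<in> {-1<..<1} \<Longrightarrow> \<bar>P x\<bar> \<le> Q" and Q: "Q \<ge> 0"
  and x: "\<bar>x\<bar> \<le> \<rho>" and \<rho>: "\<rho> < 1"
  shows "\<bar>U x\<bar> \<le> max (8+Q) (4/(1-\<rho>))"
proof -
  have x1: "-1 < x" "x < 1" using x \<rho> by auto
  have up: "U x \<le> max (8+Q) (4/(1+x))" by (rule apriori_upper[OF sol Pb Q x1])
  have "4/(1+x) \<le> 4/(1-\<rho>)" using x \<rho> by (intro divide_left_mono) auto
  then have up2: "U x \<le> max (8+Q) (4/(1-\<rho>))" using up by linarith
  have Pb2: "\<And>y. y \<in> {-1<..<1} \<Longrightarrow> \<bar>P (-y)\<bar> \<le> Q" using Pb by auto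
  have "(\<lambda>y. - U (-y)) (-x) \<le> max (8+Q) (4/(1+(-x)))"
    by (rule apriori_upper[OF solg_reflect[OF sol] Pb2 Q]) (use x1 in auto)
  moreover have "4/(1+(-x)) \<le> 4/(1-\<rho>)" using x \<rho> by (intro divide_left_mono) auto
  ultimately have "- U x \<le> max (8+Q) (4/(1-\<rho>))" by simp
  then show ?thesis using up2 by (simp add: abs_le_iff)
qed

lemma FF_diff_bound:
  assumes y: "\<bar>y\<bar> \<le> \<rho>" and \<rho>: "\<rho> < 1" and u: "\<bar>u1\<bar> \<le> R" "\<bar>u2\<bar> \<le> R"
  and P: "\<bar>P1 y - P2 y\<bar> \<le> \<eta>"
  shows "\<bar>FF P1 y u1 - FF P2 y u2\<bar> \<le> (\<eta> + (2+R)*\<bar>u1 - u2\<bar>)/(1-\<rho>^2)"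
proof -
  have "\<bar>y\<bar>^2 \<le> \<rho>^2" by (rule power_mono) (use y in auto)
  then have y2: "y^2 \<le> \<rho>^2" by simp
  have r0: "\<rho> \<ge> 0" using y by linarith
  have "\<rho>*\<rho> \<le> \<rho>*1" using r0 \<rho> by (intro mult_left_mono) auto
  then have r2: "\<rho>^2 < 1" using \<rho> by (simp add: power2_eq_square)
  have d: "1 - y^2 \<ge> 1 - \<rho>^2" "1 - \<rho>^2 > 0" using y2 r2 by auto
  have eq: "FF P1 y u1 - FF P2 y u2 = ((P1 y - P2 y) - 2*y*(u1-u2) - (u1-u2)*((u1+u2)/2))/(1-y^2)"
  proof -
    have "FF P1 y u1 - FF P2 y u2 = ((P1 y - 2*y*u1 - u1^2/2) - (P2 y - 2*y*u2 - u2^2/2))/(1-y^2)"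
      unfolding FF_def by (simp only: diff_divide_distrib)
    moreover have "(P1 y - 2*y*u1 - u1^2/2) - (P2 y - 2*y*u2 - u2^2/2) = (P1 y - P2 y) - 2*y*(u1-u2) - (u1-u2)*((u1+u2)/2)"
      by (simp add: field_simps power2_eq_square)
    ultimately show ?thesis by simp
  qed
  have n1: "\<bar>2*y*(u1-u2)\<bar> \<le> 2*\<bar>u1-u2\<bar>"
  proof -
    have "\<bar>y\<bar> \<le> 1" using y \<rho> by simp
    then have "\<bar>y\<bar> * \<bar>u1-u2\<bar> \<le> 1 * \<bar>u1-u2\<bar>" by (intro mult_right_mono) auto
    then show ?thesis by (simp add: abs_mult)
  qed
  have n2: "\<bar>(u1-u2)*((u1+u2)/2)\<bar> \<le> R*\<bar>u1-u2\<bar>"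
  proof -
    have "\<bar>(u1+u2)/2\<bar> \<le> R" using u by (simp add: abs_le_iff; linarith)
    then have "\<bar>u1-u2\<bar> * \<bar>(u1+u2)/2\<bar> \<le> \<bar>u1-u2\<bar> * R" by (intro mult_left_mono) auto
    then show ?thesis by (simp add: abs_mult mult.commute)
  qed
  have num: "\<bar>(P1 y - P2 y) - 2*y*(u1-u2) - (u1-u2)*((u1+u2)/2)\<bar> \<le> \<eta> + (2+R)*\<bar>u1 - u2\<bar>"
  proof -
    have "\<bar>(P1 y - P2 y) - 2*y*(u1-u2) - (u1-u2)*((u1+u2)/2)\<bar> \<le> \<bar>P1 y - P2 y\<bar> + \<bar>2*y*(u1-u2)\<bar> + \<bar>(u1-u2)*((u1+u2)/2)\<bar>"
      by (rule order_trans[OF abs_triangle_ineq4]) (simp add: abs_triangle_ineq4 add_mono)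
    also have "\<dots> \<le> \<eta> + 2*\<bar>u1-u2\<bar> + R*\<bar>u1-u2\<bar>" using P n1 n2 by linarith
    finally show ?thesis by (simp add: algebra_simps)
  qed
  have "\<bar>FF P1 y u1 - FF P2 y u2\<bar> = \<bar>(P1 y - P2 y) - 2*y*(u1-u2) - (u1-u2)*((u1+u2)/2)\<bar>/(1-y^2)"
    unfolding eq using d by (simp add: abs_divide)
  also have "\<dots> \<le> (\<eta> + (2+R)*\<bar>u1 - u2\<bar>)/(1-\<rho>^2)" using num d by (intro frac_le) auto
  finally show ?thesis .
qed

lemma gr_arith:
  fixes w wd m R \<eta> :: real
  assumes m: "m > 0" and R: "R \<ge> 0" and \<eta>: "\<eta> \<ge> 0" and wd: "\<bar>wd\<bar> \<le> (\<eta> + (2+R)*\<bar>w\<bar>)/m"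
  shows "\<bar>2*w*wd\<bar> \<le> (2*(2+R)/m + 1)*(w^2 + (\<eta>/m)^2)"
proof -
  define a where "a = \<bar>w\<bar>"
  have a: "a \<ge> 0" unfolding a_def by simp
  have "\<bar>2*w*wd\<bar> = 2*a*\<bar>wd\<bar>" unfolding a_def by (simp add: abs_mult)
  also have "\<dots> \<le> 2*a*((\<eta> + (2+R)*a)/m)" using wd a unfolding a_def by (intro mult_left_mono) auto
  also have "\<dots> = 2*(2+R)/m * a^2 + 2*a*(\<eta>/m)" using m by (simp add: field_simps power2_eq_square)
  also have "\<dots> \<le> 2*(2+R)/m * a^2 + (a^2 + (\<eta>/m)^2)"
  proof -
    have "0 \<le> (a - \<eta>/m)^2" by simp
    then have "2*a*(\<eta>/m) \<le> a^2 + (\<eta>/m)^2" by (simp add: power2_eq_square algebra_simps)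
    then show ?thesis by simp
  qed
  also have "\<dots> \<le> (2*(2+R)/m + 1)*(a^2 + (\<eta>/m)^2)"
  proof -
    have "2*(2+R)/m \<ge> 0" using m R by simp
    then have "2*(2+R)/m * (\<eta>/m)^2 \<ge> 0" by (intro mult_nonneg_nonneg) auto
    then show ?thesis by (simp add: algebra_simps)
  qed
  finally show ?thesis unfolding a_def by simp
qed

lemma gronwall_sol:
  assumes s1: "solg P1 U1" and s2: "solg P2 U2" and \<rho>: "0 \<le> \<rho>" "\<rho> < 1" and R: "R \<ge> 0" and \<eta>: "\<eta> \<ge> 0"
  and Ub: "\<And>y. \<bar>y\<bar> \<le> \<rho> \<Longrightarrow> \<bar>U1 y\<bar> \<le> R \<and> \<bar>U2 y\<bar> \<le> R"
  and Pd: "\<And>y. \<bar>y\<bar> \<le> \<rho> \<Longrightarrow> \<bar>P1 y - P2 y\<bar> \<le> \<eta>"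
  and x: "\<bar>x\<bar> \<le> \<rho>"
  shows "(U1 x - U2 x)^2 \<le> ((U1 0 - U2 0)^2 + (\<eta>/(1-\<rho>^2))^2) * exp (2*(2+R)/(1-\<rho>^2) + 1)"
proof -
  define m where "m = 1 - \<rho>^2"
  have m: "m > 0" unfolding m_def using \<rho> by (simp add: power_less_one_iff abs_square_less_1)
  define K where "K = 2*(2+R)/m + 1"
  have K: "K \<ge> 1" unfolding K_def using m R by simp
  define E where "E = (\<eta>/m)^2"
  define \<Phi> where "\<Phi> = (\<lambda>y. (U1 y - U2 y)^2 + E)"
  define \<Phi>d where "\<Phi>d = (\<lambda>y. 2 * (U1 y - U2 y) * (FF P1 y (U1 y) - FF P2 y (U2 y)))"
  have d\<Phi>: "(\<Phi> has_real_derivative \<Phi>d y) (at y)" if y: "\<bar>y\<bar> \<le> \<rho>" for y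
  proof -
    have y1: "y \<in> {-1<..<1}" using y \<rho> by auto
    have "(U1 has_real_derivative FF P1 y (U1 y)) (at y)" "(U2 has_real_derivative FF P2 y (U2 y)) (at y)"
      using s1 s2 y1 unfolding solg_def by auto
    then show ?thesis unfolding \<Phi>_def \<Phi>d_def by (auto intro!: derivative_eq_intros)
  qed
  have bd: "\<bar>\<Phi>d y\<bar> \<le> K * \<Phi> y" if y: "\<bar>y\<bar> \<le> \<rho>" for y
  proof -
    have "\<bar>FF P1 y (U1 y) - FF P2 y (U2 y)\<bar> \<le> (\<eta> + (2+R)*\<bar>U1 y - U2 y\<bar>)/(1-\<rho>^2)"
    proof -
      have u: "\<bar>U1 y\<bar> \<le> R" "\<bar>U2 y\<bar> \<le> R" using Ub[OF y] by auto
      show ?thesis using FF_diff_bound[where ?P1.0=P1 and ?P2.0=P2, OF y \<rho>(2) u Pd[OF y]] .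
    qed
    from gr_arith[OF m R \<eta> this[folded m_def]] show ?thesis unfolding \<Phi>d_def \<Phi>_def K_def E_def by simp
  qed
  have \<Phi>pos: "\<Phi> y \<ge> 0" for y unfolding \<Phi>_def E_def by simp
  have main: "\<Phi> x \<le> \<Phi> 0 * exp K"
  proof (cases "x \<ge> 0")
    case True
    have "\<Phi> x * exp (-K*x) \<le> \<Phi> 0 * exp (-K*0)"
    proof (rule DERIV_nonpos_imp_nonincreasing[OF True])
      fix y assume y: "0 \<le> y" "y \<le> x"
      then have yr: "\<bar>y\<bar> \<le> \<rho>" using x by auto
      have d: "((\<lambda>y. \<Phi> y * exp (-K*y)) has_real_derivative \<Phi>d y * exp (-K*y) + \<Phi> y * (exp (-K*y) * (-K))) (at y)"
        by (rule derivative_eq_intros d\<Phi>[OF yr] refl)+ simp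
      have "\<Phi>d y * exp (-K*y) + \<Phi> y * (exp (-K*y) * (-K)) = exp (-K*y) * (\<Phi>d y - K * \<Phi> y)" by (simp add: algebra_simps)
      also have "\<dots> \<le> 0" using bd[OF yr] by (intro mult_nonneg_nonpos) (auto simp: abs_le_iff)
      finally show "\<exists>d. ((\<lambda>y. \<Phi> y * exp (-K*y)) has_real_derivative d) (at y) \<and> d \<le> 0" using d by blast
    qed
    then have "\<Phi> x \<le> \<Phi> 0 * exp (K*x)" by (simp add: exp_minus field_simps)
    also have "\<dots> \<le> \<Phi> 0 * exp K"
    proof -
      have "K*x \<le> K*1" using K x \<rho> True by (intro mult_left_mono) auto
      then show ?thesis using \<Phi>pos by (intro mult_left_mono) auto
    qed
    finally show ?thesis .
  next
    case False
    then have x0: "x \<le> 0" by simp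
    have "\<Phi> x * exp (K*x) \<le> \<Phi> 0 * exp (K*0)"
    proof (rule DERIV_nonneg_imp_nondecreasing[OF x0])
      fix y assume y: "x \<le> y" "y \<le> 0"
      then have yr: "\<bar>y\<bar> \<le> \<rho>" using x by auto
      have d: "((\<lambda>y. \<Phi> y * exp (K*y)) has_real_derivative \<Phi>d y * exp (K*y) + \<Phi> y * (exp (K*y) * K)) (at y)"
        by (rule derivative_eq_intros d\<Phi>[OF yr] refl)+ simp
      have "\<Phi>d y * exp (K*y) + \<Phi> y * (exp (K*y) * K) = exp (K*y) * (\<Phi>d y + K * \<Phi> y)" by (simp add: algebra_simps)
      also have "\<dots> \<ge> 0" using bd[OF yr] by (intro mult_nonneg_nonneg) (auto simp: abs_le_iff)
      finally show "\<exists>d. ((\<lambda>y. \<Phi> y * exp (K*y)) has_real_derivative d) (at y) \<and> 0 \<le> d" using d by blast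
    qed
    then have "\<Phi> x \<le> \<Phi> 0 * exp (-(K*x))" by (simp add: exp_minus field_simps)
    also have "\<dots> \<le> \<Phi> 0 * exp K"
    proof -
      have "K*(-x) \<le> K*1" using K x \<rho> x0 by (intro mult_left_mono) auto
      then have "-(K*x) \<le> K*1" by simp
      then show ?thesis using \<Phi>pos by (intro mult_left_mono) auto
    qed
    finally show ?thesis .
  qed
  have "(U1 x - U2 x)^2 \<le> \<Phi> x" unfolding \<Phi>_def E_def by simp
  also have "\<dots> \<le> \<Phi> 0 * exp K" by (rule main)
  finally show ?thesis unfolding \<Phi>_def E_def K_def m_def by simp
qed

lemma cauchy_bound:
  fixes X \<beta> :: "nat \<Rightarrow> real"
  assumes bd: "\<And>n m. \<bar>X n - X m\<bar> \<le> C*(\<beta> n + \<beta> m)" and \<beta>: "\<beta> \<longlonglongrightarrow> 0"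
  and \<beta>pos: "\<And>n. \<beta> n \<ge> 0" and C: "C \<ge> 0"
  shows "X \<longlonglongrightarrow> lim X" "\<And>n. \<bar>X n - lim X\<bar> \<le> C * \<beta> n"
proof -
  have "Cauchy X"
  proof (rule CauchyI)
    fix e :: real assume e: "e > 0"
    then have "e/(2*C+2) > 0" using C by simp
    then obtain M where M: "\<And>n. n \<ge> M \<Longrightarrow> \<beta> n < e/(2*C+2)"
      using \<beta> unfolding LIMSEQ_iff by (metis \<beta>pos abs_of_nonneg diff_zero real_norm_def)
    have "\<forall>m\<ge>M. \<forall>n\<ge>M. norm (X m - X n) < e"
    proof (intro allI impI)
      fix m n assume mn: "m \<ge> M" "n \<ge> M"
      have "\<beta> m + \<beta> n < 2*(e/(2*C+2))" using M[OF mn(1)] M[OF mn(2)] by simp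
      then have "C*(\<beta> m + \<beta> n) \<le> C*(2*(e/(2*C+2)))" using C by (intro mult_left_mono) auto
      also have "\<dots> < e" using C e by (simp add: field_simps)
      finally show "norm (X m - X n) < e" using bd[of m n] by simp
    qed
    then show "\<exists>M. \<forall>m\<ge>M. \<forall>n\<ge>M. norm (X m - X n) < e" by blast
  qed
  then have "convergent X" by (simp add: Cauchy_convergent_iff)
  then show lim: "X \<longlonglongrightarrow> lim X" by (simp add: convergent_LIMSEQ_iff)
  fix n
  have "(\<lambda>m. \<bar>X n - X m\<bar>) \<longlonglongrightarrow> \<bar>X n - lim X\<bar>" by (intro tendsto_intros lim)
  moreover have "(\<lambda>m. C*(\<beta> n + \<beta> m)) \<longlonglongrightarrow> C*(\<beta> n + 0)" by (intro tendsto_intros \<beta>)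
  ultimately show "\<bar>X n - lim X\<bar> \<le> C * \<beta> n" using bd by (intro LIMSEQ_le) auto
qed

lemma sq_le_imp_abs_le: "(a::real)^2 \<le> b^2 \<Longrightarrow> 0 \<le> b \<Longrightarrow> \<bar>a\<bar> \<le> b"
  using abs_le_square_iff[of a b] by simp

lemma limit_solg:
  fixes Ps :: "nat \<Rightarrow> real \<Rightarrow> real" and Us :: "nat \<Rightarrow> real \<Rightarrow> real"
  assumes sols: "\<And>n. solg (Ps n) (Us n)"
  and Pb: "\<And>n x. x \<in> {-1<..<1} \<Longrightarrow> \<bar>Ps n x\<bar> \<le> Q" and Q: "Q \<ge> 0"
  and Pconv: "\<And>n x. x \<in> {-1<..<1} \<Longrightarrow> \<bar>Ps n x - P x\<bar> \<le> e n" and e: "e \<longlonglongrightarrow> 0" "\<And>n. e n \<ge> 0"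
  and g: "(\<lambda>n. Us n 0) \<longlonglongrightarrow> g"
  shows "\<exists>U. solg P U \<and> U 0 = g \<and> (\<forall>x\<in>{-1<..<1}. (\<lambda>n. Us n x) \<longlonglongrightarrow> U x)"
proof -
  define \<beta> where "\<beta> = (\<lambda>n. \<bar>Us n 0 - g\<bar> + e n)"
  have \<beta>pos: "\<beta> n \<ge> 0" for n unfolding \<beta>_def using e(2)[of n] by simp
  have "\<beta> \<longlonglongrightarrow> \<bar>g - g\<bar> + 0" unfolding \<beta>_def by (intro tendsto_intros g e)
  then have \<beta>0: "\<beta> \<longlonglongrightarrow> 0" by simp
  define Rf where "Rf = (\<lambda>\<rho>::real. max (8+Q) (4/(1-\<rho>)))"
  define Cf where "Cf = (\<lambda>\<rho>. sqrt ((1 + 1/(1-\<rho>^2)^2) * exp (2*(2+Rf \<rho>)/(1-\<rho>^2) + 1)))"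
  have Rf0: "Rf \<rho> \<ge> 0" for \<rho> unfolding Rf_def using Q by simp
  have Cf0: "Cf \<rho> \<ge> 0" for \<rho> unfolding Cf_def by simp
  have Ubd: "\<bar>Us n y\<bar> \<le> Rf \<rho>" if "\<bar>y\<bar> \<le> \<rho>" "\<rho> < 1" for n y \<rho>
    unfolding Rf_def by (rule apriori_abs[OF sols Pb Q that])
  have pair: "\<bar>Us n y - Us m y\<bar> \<le> Cf \<rho> * (\<beta> n + \<beta> m)" if \<rho>: "0 \<le> \<rho>" "\<rho> < 1" and y: "\<bar>y\<bar> \<le> \<rho>" for n m y \<rho>
  proof -
    define mm where "mm = 1 - \<rho>^2"
    define EE where "EE = exp (2*(2+Rf \<rho>)/(1-\<rho>^2) + 1)"
    have mm: "mm > 0" unfolding mm_def using \<rho> by (simp add: power_less_one_iff abs_square_less_1)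
    have Pd: "\<bar>Ps n z - Ps m z\<bar> \<le> e n + e m" if "\<bar>z\<bar> \<le> \<rho>" for z
    proof -
      have z: "z \<in> {-1<..<1}" using that \<rho> by auto
      show ?thesis using Pconv[OF z, of n] Pconv[OF z, of m] by (simp add: abs_le_iff; linarith)
    qed
    have "(Us n y - Us m y)^2 \<le> ((Us n 0 - Us m 0)^2 + ((e n + e m)/(1-\<rho>^2))^2) * EE"
      unfolding EE_def
      by (rule gronwall_sol[OF sols sols \<rho> Rf0 _ _ Pd y]) (use e(2) Ubd \<rho> in auto)
    also have "\<dots> \<le> ((\<beta> n + \<beta> m)^2 * (1 + 1/mm^2)) * EE"
    proof -
      have a: "\<bar>Us n 0 - Us m 0\<bar> \<le> \<beta> n + \<beta> m" unfolding \<beta>_def using e(2)[of n] e(2)[of m]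
        by (simp add: abs_le_iff; linarith)
      have a2: "(Us n 0 - Us m 0)^2 \<le> (\<beta> n + \<beta> m)^2"
        using a abs_le_square_iff[of "Us n 0 - Us m 0" "\<beta> n + \<beta> m"] \<beta>pos[of n] \<beta>pos[of m] by simp
      have b: "e n + e m \<le> \<beta> n + \<beta> m" unfolding \<beta>_def by simp
      have "(e n + e m)^2 \<le> (\<beta> n + \<beta> m)^2" using b e(2)[of n] e(2)[of m] by (intro power_mono) auto
      then have b2: "((e n + e m)/mm)^2 \<le> (\<beta> n + \<beta> m)^2/mm^2" using mm by (simp add: power_divide divide_right_mono)
      have "(Us n 0 - Us m 0)^2 + ((e n + e m)/mm)^2 \<le> (\<beta> n + \<beta> m)^2 * (1 + 1/mm^2)"
        using a2 b2 by (simp add: algebra_simps)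
      moreover have "EE \<ge> 0" unfolding EE_def by simp
      ultimately show ?thesis unfolding mm_def by (intro mult_right_mono) auto
    qed
    also have "\<dots> = (Cf \<rho> * (\<beta> n + \<beta> m))^2"
    proof -
      have "(Cf \<rho>)^2 = (1 + 1/mm^2) * EE" unfolding Cf_def EE_def mm_def
        using mm unfolding mm_def by (simp add: add_pos_nonneg)
      then show ?thesis by (simp add: power_mult_distrib)
    qed
    finally show ?thesis by (rule sq_le_imp_abs_le) (use Cf0 \<beta>pos in simp)
  qed
  define U where "U = (\<lambda>x. lim (\<lambda>n. Us n x))"
  have unif: "\<bar>Us n y - U y\<bar> \<le> Cf \<rho> * \<beta> n" if "0 \<le> \<rho>" "\<rho> < 1" "\<bar>y\<bar> \<le> \<rho>" for n y \<rho>
    unfolding U_def by (rule cauchy_bound(2)[OF pair[OF that] \<beta>0 \<beta>pos Cf0])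
  have conv: "(\<lambda>n. Us n x) \<longlonglongrightarrow> U x" if "x \<in> {-1<..<1}" for x
  proof -
    have "0 \<le> \<bar>x\<bar>" "\<bar>x\<bar> < 1" "\<bar>x\<bar> \<le> \<bar>x\<bar>" using that by auto
    then show ?thesis unfolding U_def by (rule cauchy_bound(1)[OF pair \<beta>0 \<beta>pos Cf0])
  qed
  have Ubdl: "\<bar>U y\<bar> \<le> Rf \<rho>" if "\<bar>y\<bar> \<le> \<rho>" "\<rho> < 1" for y \<rho>
  proof -
    have "y \<in> {-1<..<1}" using that by auto
    then have "(\<lambda>n. \<bar>Us n y\<bar>) \<longlonglongrightarrow> \<bar>U y\<bar>" by (intro tendsto_intros conv)
    then show ?thesis by (rule LIMSEQ_le_const2) (use Ubd that in auto)
  qed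
  have "solg P U" unfolding solg_def
  proof
    fix x0 :: real assume x0: "x0 \<in> {-1<..<1}"
    define \<rho> where "\<rho> = (1 + \<bar>x0\<bar>)/2"
    have \<rho>: "0 \<le> \<rho>" "\<rho> < 1" "\<bar>x0\<bar> < \<rho>" unfolding \<rho>_def using x0 by auto
    define S where "S = {-\<rho><..<\<rho>}"
    have S: "open S" "convex S" "x0 \<in> S" unfolding S_def using \<rho> by auto
    have Sy: "\<bar>y\<bar> \<le> \<rho>" "y \<in> {-1<..<1}" if "y \<in> S" for y using that \<rho> unfolding S_def by auto
    define \<gamma> where "\<gamma> = (\<lambda>n. (e n + (2 + Rf \<rho>) * (Cf \<rho> * \<beta> n)) / (1 - \<rho>^2))"
    have "\<rho>^2 < 1" using \<rho> by (simp add: power_less_one_iff abs_square_less_1)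
    then have r2: "1 - \<rho>^2 \<noteq> 0" by simp
    have "\<gamma> \<longlonglongrightarrow> (0 + (2 + Rf \<rho>) * (Cf \<rho> * 0)) / (1 - \<rho>^2)" unfolding \<gamma>_def using r2 by (intro tendsto_intros e \<beta>0) auto
    then have \<gamma>0: "\<gamma> \<longlonglongrightarrow> 0" by simp
    have dd: "\<bar>FF (Ps n) y (Us n y) - FF P y (U y)\<bar> \<le> \<gamma> n" if y: "y \<in> S" for n y
    proof -
      have "\<bar>FF (Ps n) y (Us n y) - FF P y (U y)\<bar> \<le> (e n + (2 + Rf \<rho>)*\<bar>Us n y - U y\<bar>)/(1-\<rho>^2)"
        by (rule FF_diff_bound[where ?P1.0="Ps n" and ?P2.0=P, OF Sy(1)[OF y] \<rho>(2) Ubd[OF Sy(1)[OF y] \<rho>(2), of n] Ubdl[OF Sy(1)[OF y] \<rho>(2)] Pconv[OF Sy(2)[OF y], of n]])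
      also have "\<dots> \<le> \<gamma> n" unfolding \<gamma>_def
      proof (rule divide_right_mono)
        show "e n + (2 + Rf \<rho>) * \<bar>Us n y - U y\<bar> \<le> e n + (2 + Rf \<rho>) * (Cf \<rho> * \<beta> n)"
          using unif[OF \<rho>(1,2) Sy(1)[OF y], of n] Rf0[of \<rho>] by (simp add: mult_left_mono)
        have "\<rho>^2 < 1" using \<rho> by (simp add: power_less_one_iff abs_square_less_1)
        then show "0 \<le> 1 - \<rho>^2" by simp
      qed
      finally show ?thesis .
    qed
    have "\<exists>G. \<forall>y\<in>S. (\<lambda>n. Us n y) \<longlonglongrightarrow> G y \<and> (G has_derivative (\<lambda>h. FF P y (U y) * h)) (at y within S)"
    proof (rule has_derivative_sequence[where f=Us and f'="\<lambda>n y h. FF (Ps n) y (Us n y) * h" and g'="\<lambda>y h. FF P y (U y) * h", OF S(2) _ _ S(3) conv[OF x0]])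
      fix n y assume y: "y \<in> S"
      have "(Us n has_real_derivative FF (Ps n) y (Us n y)) (at y)" using sols[of n] Sy(2)[OF y] unfolding solg_def by auto
      then show "(Us n has_derivative (\<lambda>h. FF (Ps n) y (Us n y) * h)) (at y within S)"
        unfolding has_field_derivative_def by (rule has_derivative_at_withinI)
    next
      fix \<epsilon> :: real assume \<epsilon>: "\<epsilon> > 0"
      have "\<forall>\<^sub>F n in sequentially. \<gamma> n < \<epsilon>" using \<gamma>0 \<epsilon> by (rule order_tendstoD(2))
      then show "\<forall>\<^sub>F n in sequentially. \<forall>y\<in>S. \<forall>h. norm (FF (Ps n) y (Us n y) * h - FF P y (U y) * h) \<le> \<epsilon> * norm h"
      proof (rule eventually_mono)
        fix n assume n: "\<gamma> n < \<epsilon>"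
        show "\<forall>y\<in>S. \<forall>h. norm (FF (Ps n) y (Us n y) * h - FF P y (U y) * h) \<le> \<epsilon> * norm h"
        proof (intro ballI allI)
          fix y h assume y: "y \<in> S"
          have "norm (FF (Ps n) y (Us n y) * h - FF P y (U y) * h) = \<bar>FF (Ps n) y (Us n y) - FF P y (U y)\<bar> * \<bar>h\<bar>"
            by (simp add: abs_mult left_diff_distrib[symmetric])
          also have "\<dots> \<le> \<epsilon> * \<bar>h\<bar>" using dd[OF y, of n] n by (intro mult_right_mono) auto
          finally show "norm (FF (Ps n) y (Us n y) * h - FF P y (U y) * h) \<le> \<epsilon> * norm h" by simp
        qed
      qed
    qed
    then obtain G where G: "\<And>y. y \<in> S \<Longrightarrow> (\<lambda>n. Us n y) \<longlonglongrightarrow> G y"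
      "\<And>y. y \<in> S \<Longrightarrow> (G has_derivative (\<lambda>h. FF P y (U y) * h)) (at y within S)" by blast
    have GU: "G y = U y" if "y \<in> S" for y using LIMSEQ_unique[OF G(1)[OF that] conv[OF Sy(2)[OF that]]] .
    have "(G has_derivative (\<lambda>h. FF P x0 (U x0) * h)) (at x0)" using G(2)[OF S(3)] at_within_open[OF S(3,1)] by simp
    then have "(G has_real_derivative FF P x0 (U x0)) (at x0)" unfolding has_field_derivative_def .
    then show "(U has_real_derivative FF P x0 (U x0)) (at x0)"
      by (rule has_field_derivative_transform_within_open[OF _ S(1,3)]) (use GU in auto)
  qed
  moreover have "U 0 = g" unfolding U_def using limI[OF g] .
  ultimately show ?thesis using conv by blast
qed

lemma Pc_bound:
  assumes "c1 c = -1" "\<bar>c2 c\<bar> \<le> B" "\<bar>c3 c\<bar> \<le> B" "x \<in> {-1<..<1}"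
  shows "\<bar>Pc c x\<bar> \<le> 3*B+2"
proof -
  have x: "-1 < x" "x < 1" using assms(4) by auto
  have x2: "0 \<le> 1 - x^2" "1 - x^2 \<le> 1" using x by (auto simp: abs_square_le_1 less_imp_le)
  have a: "\<bar>c1 c * (1 - x)\<bar> \<le> 2" using assms(1) x by simp
  have b: "\<bar>c2 c * (1 + x)\<bar> \<le> B * 2"
    unfolding abs_mult using assms(2) x by (intro mult_mono) auto
  have c: "\<bar>c3 c * (1 - x^2)\<bar> \<le> B * 1"
    unfolding abs_mult using assms(3) x2 by (intro mult_mono) auto
  have "\<bar>Pc c x\<bar> \<le> \<bar>c1 c * (1 - x)\<bar> + \<bar>c2 c * (1 + x)\<bar> + \<bar>c3 c * (1 - x^2)\<bar>"
    unfolding Pc_def by (rule order_trans[OF abs_triangle_ineq add_right_mono[OF abs_triangle_ineq]])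
  then show ?thesis using a b c by linarith
qed

lemma Pc_diff:
  assumes "c1 c = c1 c'" "x \<in> {-1<..<1}"
  shows "\<bar>Pc c x - Pc c' x\<bar> \<le> 2*\<bar>c2 c - c2 c'\<bar> + \<bar>c3 c - c3 c'\<bar>"
proof -
  have x: "-1 < x" "x < 1" using assms(2) by auto
  have x2: "0 \<le> 1 - x^2" "1 - x^2 \<le> 1" using x by (auto simp: abs_square_le_1 less_imp_le)
  have eq: "Pc c x - Pc c' x = (c2 c - c2 c') * (1 + x) + (c3 c - c3 c') * (1 - x^2)"
    unfolding Pc_def using assms(1) by (simp add: algebra_simps)
  have b: "\<bar>(c2 c - c2 c') * (1 + x)\<bar> \<le> \<bar>c2 c - c2 c'\<bar> * 2"
    unfolding abs_mult using x by (intro mult_mono) auto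
  have c: "\<bar>(c3 c - c3 c') * (1 - x^2)\<bar> \<le> \<bar>c3 c - c3 c'\<bar> * 1"
    unfolding abs_mult using x2 by (intro mult_mono) auto
  show ?thesis unfolding eq using abs_triangle_ineq[of "(c2 c - c2 c') * (1 + x)" "(c3 c - c3 c') * (1 - x^2)"] b c
    by linarith
qed

lemma uniform_entry:
  fixes K :: "(param \<times> real) set"
  assumes K: "compact K" "K \<subseteq> Iset \<inter> {(c, g). c1 c = -1 \<and> g < gamma_plus c}"
  and B: "B \<ge> 0" "\<And>c g. (c, g) \<in> K \<Longrightarrow> \<bar>c2 c\<bar> \<le> B \<and> \<bar>c3 c\<bar> \<le> B"
  and M: "M = 16*B+16" and t1: "t1 = 1/(M^2+M+B+1)"
  shows "\<exists>ts. 0 < ts \<and> ts \<le> t1 \<and> (\<forall>(c, g)\<in>K. \<forall>U. is_sol c U \<and> U 0 = g \<longrightarrow> U (ts - 1) - 2 < -M*ts)"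
proof (rule ccontr)
  assume neg: "\<not> ?thesis"
  have M0: "M > 0" using M B by simp
  have den: "M^2+M+B+1 \<ge> 1" using M0 B by (simp add: add_nonneg_nonneg)
  then have t1p: "0 < t1" "t1 \<le> 1" unfolding t1 by auto
  have t1den: "t1 * (M^2+M+B+1) = 1" unfolding t1 using den by simp
  define \<tau> where "\<tau> = (\<lambda>n::nat. t1 / (real n + 2))"
  have \<tau>: "0 < \<tau> n" "\<tau> n \<le> t1" for n unfolding \<tau>_def using t1p by (auto simp: divide_le_eq)
  have "\<forall>n. \<exists>pU. fst pU \<in> K \<and> is_sol (fst (fst pU)) (snd pU) \<and> snd pU 0 = snd (fst pU) \<and> \<not> (snd pU (\<tau> n - 1) - 2 < -M * \<tau> n)"
  proof
    fix n
    from neg \<tau>[of n] obtain c g U where "(c, g) \<in> K" "is_sol c U" "U 0 = g" "\<not> (U (\<tau> n - 1) - 2 < -M * \<tau> n)"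
      by blast
    then show "\<exists>pU. fst pU \<in> K \<and> is_sol (fst (fst pU)) (snd pU) \<and> snd pU 0 = snd (fst pU) \<and> \<not> (snd pU (\<tau> n - 1) - 2 < -M * \<tau> n)"
      by (intro exI[of _ "((c, g), U)"]) auto
  qed
  then obtain pU where pU: "\<And>n. fst (pU n) \<in> K" "\<And>n. is_sol (fst (fst (pU n))) (snd (pU n))"
    "\<And>n. snd (pU n) 0 = snd (fst (pU n))" "\<And>n. \<not> (snd (pU n) (\<tau> n - 1) - 2 < -M * \<tau> n)"
    by metis
  define pp where "pp = (\<lambda>n. fst (pU n))"
  define UU where "UU = (\<lambda>n. snd (pU n))"
  have ppK: "pp n \<in> K" for n unfolding pp_def using pU(1) .
  have c1pp: "c1 (fst (pp n)) = -1" for n using ppK[of n] K(2) by (cases "pp n") auto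
  have Bpp: "\<bar>c2 (fst (pp n))\<bar> \<le> B" "\<bar>c3 (fst (pp n))\<bar> \<le> B" for n using ppK[of n] B(2) by (cases "pp n"; auto)+
  have solUU: "is_sol (fst (pp n)) (UU n)" for n unfolding pp_def UU_def using pU(2) .
  have low: "-M*t \<le> UU n (t-1) - 2" if t: "\<tau> n \<le> t" "t \<le> t1" for n t
  proof (rule ccontr)
    assume "\<not> -M*t \<le> UU n (t-1) - 2"
    then have Vt: "(\<lambda>t. UU n (t-1) - 2) t < -M*t" by simp
    have sV: "solV (c2 (fst (pp n)) + 2*c3 (fst (pp n)) - 3) (c3 (fst (pp n))) (\<lambda>t. UU n (t-1) - 2)"
      by (rule solV_of_sol[OF solUU c1pp])
    have bb: "\<bar>c2 (fst (pp n)) + 2*c3 (fst (pp n)) - 3\<bar> \<le> 3*B+3" using Bpp[of n] by (simp add: abs_le_iff; linarith)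
    have "t * (M^2+M+B+1) \<le> t1 * (M^2+M+B+1)" using t den by (intro mult_right_mono) auto
    then have tb: "t * (M^2+M+B+1) \<le> 1" using t1den by simp
    have tpos: "0 < t" using t \<tau>[of n] by linarith
    have "(\<lambda>t. UU n (t-1) - 2) (\<tau> n) < -M * \<tau> n"
      by (rule trap[OF sV B(1) bb Bpp(2)[of n] M tb tpos Vt \<tau>(1)[of n] t(1)])
    then show False using pU(4)[of n] unfolding UU_def by simp
  qed
  have "seq_compact K" using K(1) by (rule compact_imp_seq_compact)
  then obtain l r where l: "l \<in> K" and r: "strict_mono r" and lim: "(pp \<circ> r) \<longlonglongrightarrow> l"
    using seq_compactE[of K pp] ppK by blast
  obtain c g where lcg: "l = (c, g)" by (cases l)
  have c1c: "c1 c = -1" and gless: "g < gamma_plus c" using l K(2) unfolding lcg by auto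
  have Bc: "\<bar>c2 c\<bar> \<le> B" "\<bar>c3 c\<bar> \<le> B" using l B(2) unfolding lcg by auto
  have cl: "(\<lambda>n. fst (pp (r n))) \<longlonglongrightarrow> c" using tendsto_fst[OF lim] unfolding lcg by (simp add: comp_def)
  have gl: "(\<lambda>n. snd (pp (r n))) \<longlonglongrightarrow> g" using tendsto_snd[OF lim] unfolding lcg by (simp add: comp_def)
  have c2l: "(\<lambda>n. c2 (fst (pp (r n)))) \<longlonglongrightarrow> c2 c" unfolding c2_def by (intro tendsto_intros cl)
  have c3l: "(\<lambda>n. c3 (fst (pp (r n)))) \<longlonglongrightarrow> c3 c" unfolding c3_def by (intro tendsto_intros cl)
  define e where "e = (\<lambda>n. 2*\<bar>c2 (fst (pp (r n))) - c2 c\<bar> + \<bar>c3 (fst (pp (r n))) - c3 c\<bar>)"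
  have "e \<longlonglongrightarrow> 2*\<bar>c2 c - c2 c\<bar> + \<bar>c3 c - c3 c\<bar>" unfolding e_def by (intro tendsto_intros c2l c3l)
  then have e0: "e \<longlonglongrightarrow> 0" by simp
  have "\<exists>U. solg (Pc c) U \<and> U 0 = g \<and> (\<forall>x\<in>{-1<..<1}. (\<lambda>n. UU (r n) x) \<longlonglongrightarrow> U x)"
  proof (rule limit_solg[where Ps="\<lambda>n. Pc (fst (pp (r n)))" and Q="3*B+2" and e=e])
    show "solg (Pc (fst (pp (r n)))) (UU (r n))" for n using solUU is_sol_solg by blast
    show "\<bar>Pc (fst (pp (r n))) x\<bar> \<le> 3*B+2" if "x \<in> {-1<..<1}" for n x
      using Pc_bound[OF c1pp Bpp that] .
    show "0 \<le> 3*B+2" using B by simp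
    show "\<bar>Pc (fst (pp (r n))) x - Pc c x\<bar> \<le> e n" if "x \<in> {-1<..<1}" for n x
      unfolding e_def using Pc_diff[OF _ that] c1pp c1c by simp
    show "e \<longlonglongrightarrow> 0" by (rule e0)
    show "0 \<le> e n" for n unfolding e_def by simp
    have "UU (r n) 0 = snd (pp (r n))" for n unfolding UU_def pp_def using pU(3) .
    then show "(\<lambda>n. UU (r n) 0) \<longlonglongrightarrow> g" using gl by simp
  qed
  then obtain U where U: "solg (Pc c) U" "U 0 = g" "\<And>x. x \<in> {-1<..<1} \<Longrightarrow> (\<lambda>n. UU (r n) x) \<longlonglongrightarrow> U x"
    by blast
  have Ulow: "-M*t \<le> U (t-1) - 2" if t: "0 < t" "t \<le> t1" for t
  proof -
    have tm: "t - 1 \<in> {-1<..<1}" using t t1p by auto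
    have conv: "(\<lambda>n. UU (r n) (t-1) - 2) \<longlonglongrightarrow> U (t-1) - 2" by (intro tendsto_intros U(3)[OF tm])
    obtain N :: nat where N: "real N \<ge> t1/t" using real_arch_simple by blast
    have "\<forall>n\<ge>N. -M*t \<le> UU (r n) (t-1) - 2"
    proof (intro allI impI)
      fix n assume n: "n \<ge> N"
      have "real (r n) \<ge> real n" using seq_suble[OF r, of n] by simp
      then have "real (r n) + 2 \<ge> t1/t" using N n by linarith
      then have "t1 \<le> t * (real (r n) + 2)" using t by (simp add: divide_le_eq mult.commute)
      then have "\<tau> (r n) \<le> t" unfolding \<tau>_def by (simp add: divide_le_eq mult.commute)
      then show "-M*t \<le> UU (r n) (t-1) - 2" using low[of "r n" t] t by simp
    qed
    then show ?thesis using LIMSEQ_le_const[OF conv] by blast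
  qed
  have "is_max_sol c U" using max_of_low[OF _ c1c M0 t1p Ulow] U(1) is_sol_solg by blast
  then have "gamma_plus c = g" using gamma_plus_eq U(2) by simp
  then show False using gless by simp
qed

lemma final_powr:
  fixes el C0 \<epsilon> :: real
  assumes "\<bar>el\<bar> \<ge> 1" "\<epsilon> > 0" "C0 \<ge> 0" "\<bar>a\<bar> \<le> C0/el^2"
  shows "\<bar>a\<bar> < (C0 + 1) * \<bar>el\<bar> powr (-2 + \<epsilon>)"
proof -
  have el0: "\<bar>el\<bar> > 0" using assms(1) by linarith
  have p2: "\<bar>el\<bar> powr (-2) = 1/el^2"
  proof -
    have "\<bar>el\<bar> powr (-2) = inverse (\<bar>el\<bar> powr 2)" by (simp add: powr_minus)
    also have "\<bar>el\<bar> powr 2 = \<bar>el\<bar>^2" using el0 by (simp add: powr_numeral)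
    finally show ?thesis by (simp add: inverse_eq_divide)
  qed
  have "el^2 > 0" using el0 by simp
  then have "C0/el^2 < (C0+1)/el^2" by (simp add: divide_strict_right_mono)
  also have "\<dots> = (C0+1) * \<bar>el\<bar> powr (-2)" using p2 by simp
  also have "\<dots> \<le> (C0+1) * \<bar>el\<bar> powr (-2 + \<epsilon>)"
    using assms by (intro mult_left_mono powr_mono) auto
  finally show ?thesis using assms(4) by linarith
qed

theorem lemma2p14:
  fixes K :: "(param \<times> real) set"
  assumes "compact K"
    and "K \<subseteq> Iset \<inter> {(c, g). c1 c = -1 \<and> g < gamma_plus c}"
  shows "\<forall>\<epsilon>>0. \<exists>\<delta>>0. \<exists>C>0. \<forall>(c, g)\<in>K. \<forall>U. is_sol c U \<and> U 0 = g \<longrightarrow>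
           (\<forall>x. -1 < x \<and> x < -1 + \<delta> \<and> x < 1 \<longrightarrow>
              \<bar>U x - 2 - 4 / ln ((1 + x) / 3)\<bar> < C * \<bar>ln ((1 + x) / 3)\<bar> powr (-2 + \<epsilon>))"
proof (intro allI impI)
  fix \<epsilon> :: real assume \<epsilon>: "\<epsilon> > 0"
  have "bounded K" using assms(1) by (rule compact_imp_bounded)
  then obtain B0 where B0: "\<And>p. p \<in> K \<Longrightarrow> norm p \<le> B0" unfolding bounded_iff by blast
  define B where "B = max B0 0"
  have B: "B \<ge> 0" unfolding B_def by simp
  have Bc: "\<bar>c2 c\<bar> \<le> B \<and> \<bar>c3 c\<bar> \<le> B" if "(c, g) \<in> K" for c g
  proof -
    have n: "norm (c, g) \<le> B" using B0[OF that] unfolding B_def by simp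
    have "norm c \<le> norm (c, g)" by (rule norm_fst_le)
    moreover have "norm (snd c) \<le> norm c" by (metis norm_snd_le prod.collapse)
    moreover have "norm (fst (snd c)) \<le> norm (snd c)" by (metis norm_fst_le prod.collapse)
    moreover have "norm (snd (snd c)) \<le> norm (snd c)" by (metis norm_snd_le prod.collapse)
    ultimately show ?thesis using n unfolding c2_def c3_def by simp
  qed
  define M where "M = 16*B+16"
  define t1 where "t1 = 1/(M^2+M+B+1)"
  obtain ts where ts: "0 < ts" "ts \<le> t1"
    and entry: "\<forall>(c, g)\<in>K. \<forall>U. is_sol c U \<and> U 0 = g \<longrightarrow> U (ts - 1) - 2 < -M*ts"
  proof -
    have Bc': "\<And>c g. (c, g) \<in> K \<Longrightarrow> \<bar>c2 c\<bar> \<le> B \<and> \<bar>c3 c\<bar> \<le> B" using Bc by blast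
    have "\<exists>ts. 0 < ts \<and> ts \<le> t1 \<and> (\<forall>(c, g)\<in>K. \<forall>U. is_sol c U \<and> U 0 = g \<longrightarrow> U (ts - 1) - 2 < -M*ts)"
    proof (rule uniform_entry[OF assms B])
      show "\<And>c g. (c, g) \<in> K \<Longrightarrow> \<bar>c2 c\<bar> \<le> B \<and> \<bar>c3 c\<bar> \<le> B" by (rule Bc')
      show "M = 16*B+16" by (rule M_def)
      show "t1 = 1/(M^2+M+B+1)" by (rule t1_def)
    qed
    then show ?thesis using that by blast
  qed
  have M0: "M > 0" using B unfolding M_def by simp
  have den: "M^2+M+B+1 \<ge> 1" using M0 B by (simp add: add_nonneg_nonneg)
  have tsden: "ts * (M^2+M+B+1) \<le> 1"
  proof -
    have "ts * (M^2+M+B+1) \<le> t1 * (M^2+M+B+1)" using ts den by (intro mult_right_mono) auto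
    also have "\<dots> = 1" unfolding t1_def using den by simp
    finally show ?thesis .
  qed
  have ts1: "ts \<le> 1" using ts den unfolding t1_def by (smt (verit) divide_le_eq_1 mult_cancel_right1)
  define Lg where "Lg = 1/(M*ts) + \<bar>ln ts\<bar>/4 + 2*(1/4 + 2*(2 + 1/(M*ts)) + (4*B+3)*(2 + 1/(M*ts))^2)"
  have Lg0: "Lg \<ge> 0" unfolding Lg_def using M0 ts B by (simp add: add_nonneg_nonneg)
  define \<Lambda> where "\<Lambda> = 2*(2+4*Lg)+1"
  define \<delta> where "\<delta> = min ts (3 * exp (-\<Lambda>))"
  define C0 where "C0 = 8*(2+4*Lg)"
  have \<delta>: "\<delta> > 0" unfolding \<delta>_def using ts by simp
  have C0: "C0 \<ge> 0" unfolding C0_def using Lg0 by simp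
  have main: "\<bar>U x - 2 - 4 / ln ((1 + x) / 3)\<bar> < (C0+1) * \<bar>ln ((1 + x) / 3)\<bar> powr (-2 + \<epsilon>)"
    if cg: "(c, g) \<in> K" and sol: "is_sol c U" and U0: "U 0 = g" and x: "-1 < x" "x < -1 + \<delta>" for c g U x
  proof -
    have c1c: "c1 c = -1" using cg assms(2) by auto
    define V where "V = (\<lambda>t. U (t-1) - 2)"
    define t where "t = 1 + x"
    have t: "0 < t" "t < \<delta>" unfolding t_def using x by auto
    have tts: "t \<le> ts" using t unfolding \<delta>_def by simp
    have sV: "solV (c2 c + 2*c3 c - 3) (c3 c) V" unfolding V_def by (rule solV_of_sol[OF sol c1c])
    have bb: "\<bar>c2 c + 2*c3 c - 3\<bar> \<le> 3*B+3" using Bc[OF cg] by (simp add: abs_le_iff; linarith)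
    have k: "\<bar>c3 c\<bar> \<le> B" using Bc[OF cg] by simp
    have Vts: "V ts < -M*ts" unfolding V_def using entry cg sol U0 by auto
    have trapped: "V s < -M* s" if "0 < s" "s \<le> ts" for s
      by (rule trap[OF sV B bb k M_def tsden ts(1) Vts that])
    have "t/3 < exp (-\<Lambda>)" using t unfolding \<delta>_def by simp
    then have "ln (t/3) < -\<Lambda>" using t by (metis divide_pos_pos ln_exp ln_less_cancel_iff exp_gt_zero zero_less_numeral)
    then have lt: "ln (t/3) \<le> -(2*(2+4*Lg)+1)" unfolding \<Lambda>_def by simp
    have A: "\<bar>V t - 4/ln(t/3)\<bar> \<le> C0/(ln(t/3))^2"
      unfolding C0_def by (rule asym[OF sV B bb k M_def ts(1) ts1 trapped Lg_def t(1) tts lt])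
    have el1: "\<bar>ln (t/3)\<bar> \<ge> 1" using lt Lg0 by (simp add: abs_if)
    have "\<bar>V t - 4/ln(t/3)\<bar> < (C0 + 1) * \<bar>ln (t/3)\<bar> powr (-2 + \<epsilon>)"
      by (rule final_powr[OF el1 \<epsilon> C0 A])
    moreover have "V t - 4/ln(t/3) = U x - 2 - 4 / ln ((1 + x) / 3)" unfolding V_def t_def by simp
    ultimately show ?thesis unfolding t_def by simp
  qed
  show "\<exists>\<delta>>0. \<exists>C>0. \<forall>(c, g)\<in>K. \<forall>U. is_sol c U \<and> U 0 = g \<longrightarrow>
           (\<forall>x. -1 < x \<and> x < -1 + \<delta> \<and> x < 1 \<longrightarrow>
              \<bar>U x - 2 - 4 / ln ((1 + x) / 3)\<bar> < C * \<bar>ln ((1 + x) / 3)\<bar> powr (-2 + \<epsilon>))"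
  proof (rule exI[of _ \<delta>], rule conjI[OF \<delta>], rule exI[of _ "C0+1"], rule conjI)
    show "C0 + 1 > 0" using C0 by simp
    show "\<forall>(c, g)\<in>K. \<forall>U. is_sol c U \<and> U 0 = g \<longrightarrow>
           (\<forall>x. -1 < x \<and> x < -1 + \<delta> \<and> x < 1 \<longrightarrow>
              \<bar>U x - 2 - 4 / ln ((1 + x) / 3)\<bar> < (C0+1) * \<bar>ln ((1 + x) / 3)\<bar> powr (-2 + \<epsilon>))"
    proof
      fix p assume p: "p \<in> K"
      obtain c g where pcg: "p = (c, g)" by (cases p)
      show "case p of (c, g) \<Rightarrow> \<forall>U. is_sol c U \<and> U 0 = g \<longrightarrow>
           (\<forall>x. -1 < x \<and> x < -1 + \<delta> \<and> x < 1 \<longrightarrow>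
              \<bar>U x - 2 - 4 / ln ((1 + x) / 3)\<bar> < (C0+1) * \<bar>ln ((1 + x) / 3)\<bar> powr (-2 + \<epsilon>))"
        unfolding pcg prod.case
      proof (intro allI impI)
        fix U x assume h1: "is_sol c U \<and> U 0 = g" and h2: "-1 < x \<and> x < -1 + \<delta> \<and> x < 1"
        have cg: "(c, g) \<in> K" using p pcg by simp
        show "\<bar>U x - 2 - 4 / ln ((1 + x) / 3)\<bar> < (C0+1) * \<bar>ln ((1 + x) / 3)\<bar> powr (-2 + \<epsilon>)"
          using main[OF cg] h1 h2 by blast
      qed
    qed
  qed
qed

end
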